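(* There exists a matrix $A=(a_{i,j})\in UT_n(K)$ such that (a) $\mathrm{coef}_{K,l}(a_{i,j})=0$ for all $1\le i<j\le n$ and all $l\in p\mathbb Z\cup\mathbb Z_{\ge0}$, and (b) the equation $X^{(p)}A=X$ defines $L/K$, i.e. it has a solution $\Theta=(\theta_{i,j})\in UT_n(L)$, and for such a solution $L=K(\theta_{i,j}:1\le i<j\le n)$.
   Context: Let $p$ be a prime and $K$ a complete discrete valuation field of characteristic $p$ with algebraically closed residue field $k$, normalized valuation $v_K$. Fix $t\in K$ with $v_K(t)=-1$; every $x\in K$ has a unique expansion $x=\sum_{l\ge v_K(x)}x_lt^{-l}$ with $x_l\in k$, and we set $\mathrm{coef}_{K,l}(x)=x_l$ (and $0$ for $l<v_K(x)$). For a field $F$, $UT_n(F)$ denotes the group of upper triangular $n\times n$ matrices over $F$ with all diagonal entries $1$; $X^{(p)}$ is the matrix obtained by raising every entry of $X$ to the $p$-th power. Let $n\ge2$ and let $L/K$ be a totally wildly ramified finite Galois extension with $\mathrm{Gal}(L/K)\cong UT_n(\mathbb F_p)$. *)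

theory Defs
  imports Main "HOL-Computational_Algebra.Primes" "HOL-Algebra.Group"
begin

text \<open>The field L is modelled as the whole type 'a (a field); K and the coefficient
  field k are subsets of it.\<close>

definition is_subfield :: "'a::field set \<Rightarrow> bool" where
  "is_subfield S \<longleftrightarrow> 0 \<in> S \<and> 1 \<in> S \<and>
     (\<forall>x\<in>S. \<forall>y\<in>S. x + y \<in> S \<and> x - y \<in> S \<and> x * y \<in> S) \<and>
     (\<forall>x\<in>S. x \<noteq> 0 \<longrightarrow> inverse x \<in> S)"

definition field_adjoin :: "'a::field set \<Rightarrow> 'a set \<Rightarrow> 'a set" where
  "field_adjoin F S = \<Inter> {E. is_subfield E \<and> F \<subseteq> E \<and> S \<subseteq> E}"

text \<open>Discrete valuation v on K (values on K - {0}; v(0) = infinity is handled by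
  treating equality separately).\<close>
definition normalized_discrete_valuation :: "'a::field set \<Rightarrow> ('a \<Rightarrow> int) \<Rightarrow> bool" where
  "normalized_discrete_valuation K v \<longleftrightarrow>
     (\<forall>x\<in>K. \<forall>y\<in>K. x \<noteq> 0 \<longrightarrow> y \<noteq> 0 \<longrightarrow> v (x * y) = v x + v y) \<and>
     (\<forall>x\<in>K. \<forall>y\<in>K. x \<noteq> 0 \<longrightarrow> y \<noteq> 0 \<longrightarrow> x + y \<noteq> 0 \<longrightarrow> v (x + y) \<ge> min (v x) (v y)) \<and>
     v ` (K - {0}) = UNIV"

definition v_converges :: "('a::field \<Rightarrow> int) \<Rightarrow> (nat \<Rightarrow> 'a) \<Rightarrow> 'a \<Rightarrow> bool" where
  "v_converges v f y \<longleftrightarrow> (\<forall>N::int. \<exists>M0. \<forall>M\<ge>M0. f M = y \<or> v (f M - y) \<ge> N)"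

definition v_cauchy :: "('a::field \<Rightarrow> int) \<Rightarrow> (nat \<Rightarrow> 'a) \<Rightarrow> bool" where
  "v_cauchy v f \<longleftrightarrow> (\<forall>N::int. \<exists>M0. \<forall>a\<ge>M0. \<forall>b\<ge>M0. f a = f b \<or> v (f a - f b) \<ge> N)"

definition v_complete :: "'a::field set \<Rightarrow> ('a \<Rightarrow> int) \<Rightarrow> bool" where
  "v_complete K v \<longleftrightarrow>
     (\<forall>f. (\<forall>m. f m \<in> K) \<longrightarrow> v_cauchy v f \<longrightarrow> (\<exists>y\<in>K. v_converges v f y))"

text \<open>k \<subseteq> K is a coefficient field: it maps isomorphically onto the residue field
  O_K / m_K (this is how the residue field k is regarded as a subfield of K in the
  expansions x = sum x_l t^(-l), x_l in k).\<close>
definition coefficient_field :: "'a::field set \<Rightarrow> ('a \<Rightarrow> int) \<Rightarrow> 'a set \<Rightarrow> bool" where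
  "coefficient_field K v k \<longleftrightarrow> is_subfield k \<and> k \<subseteq> K \<and>
     (\<forall>a\<in>k. a \<noteq> 0 \<longrightarrow> v a = 0) \<and>
     (\<forall>u\<in>K. u \<noteq> 0 \<longrightarrow> v u = 0 \<longrightarrow> (\<exists>a\<in>k. u = a \<or> v (u - a) > 0))"

definition algebraically_closed_subfield :: "'a::field set \<Rightarrow> bool" where
  "algebraically_closed_subfield k \<longleftrightarrow>
     (\<forall>(c::nat \<Rightarrow> 'a) d. d > 0 \<longrightarrow> (\<forall>i\<le>d. c i \<in> k) \<longrightarrow> c d \<noteq> 0 \<longrightarrow>
        (\<exists>x\<in>k. (\<Sum>i\<le>d. c i * x ^ i) = 0))"

definition is_expansion :: "('a::field \<Rightarrow> int) \<Rightarrow> 'a set \<Rightarrow> 'a \<Rightarrow> 'a \<Rightarrow> (int \<Rightarrow> 'a) \<Rightarrow> bool" where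
  "is_expansion v k t x c \<longleftrightarrow> (\<forall>l. c l \<in> k) \<and> (\<exists>N. \<forall>l<N. c l = 0) \<and>
     v_converges v (\<lambda>M. \<Sum>l\<in>{- int M..int M}. c l * t powi (- l)) x"

definition coef :: "('a::field \<Rightarrow> int) \<Rightarrow> 'a set \<Rightarrow> 'a \<Rightarrow> 'a \<Rightarrow> int \<Rightarrow> 'a" where
  "coef v k t x l = (THE c. is_expansion v k t x c) l"

definition field_auts_fixing :: "'a::field set \<Rightarrow> ('a \<Rightarrow> 'a) set" where
  "field_auts_fixing K = {\<sigma>. bij \<sigma> \<and> (\<forall>x y. \<sigma> (x + y) = \<sigma> x + \<sigma> y \<and> \<sigma> (x * y) = \<sigma> x * \<sigma> y)
      \<and> \<sigma> 1 = 1 \<and> (\<forall>x\<in>K. \<sigma> x = x)}"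

definition Gal :: "'a::field set \<Rightarrow> ('a \<Rightarrow> 'a) monoid" where
  "Gal K = \<lparr>carrier = field_auts_fixing K, mult = (\<circ>), one = id\<rparr>"

definition finite_over :: "'a::field set \<Rightarrow> bool" where
  "finite_over K \<longleftrightarrow> (\<exists>B. finite B \<and> (\<forall>x. \<exists>c. (\<forall>b\<in>B. c b \<in> K) \<and> x = (\<Sum>b\<in>B. c b * b)))"

definition finite_galois :: "'a::field set \<Rightarrow> bool" where
  "finite_galois K \<longleftrightarrow> finite_over K \<and> {x. \<forall>\<sigma>\<in>field_auts_fixing K. \<sigma> x = x} = K"

text \<open>UT_n(F_p): n x n unitriangular matrices over F_p = {0..p-1}, indices 0..n-1,
  entries outside the n x n block set to 0.\<close>
definition UT_Fp :: "nat \<Rightarrow> nat \<Rightarrow> (nat \<Rightarrow> nat \<Rightarrow> nat) monoid" where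
  "UT_Fp n p = \<lparr>carrier = {M. (\<forall>i j. M i j < p) \<and> (\<forall>i j. \<not> (i < n \<and> j < n) \<longrightarrow> M i j = 0)
        \<and> (\<forall>i<n. M i i = 1) \<and> (\<forall>i j. j < i \<longrightarrow> M i j = 0)},
     mult = (\<lambda>A B. (\<lambda>i j. if i < n \<and> j < n then (\<Sum>k<n. A i k * B k j) mod p else 0)),
     one = (\<lambda>i j. if i < n \<and> i = j then 1 else 0)\<rparr>"

definition in_UT :: "nat \<Rightarrow> 'a::field set \<Rightarrow> (nat \<Rightarrow> nat \<Rightarrow> 'a) \<Rightarrow> bool" where
  "in_UT n F M \<longleftrightarrow> (\<forall>i<n. \<forall>j<n. M i j \<in> F \<and> (i = j \<longrightarrow> M i j = 1) \<and> (j < i \<longrightarrow> M i j = 0))"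

definition frob_eq :: "nat \<Rightarrow> nat \<Rightarrow> (nat \<Rightarrow> nat \<Rightarrow> 'a::field) \<Rightarrow> (nat \<Rightarrow> nat \<Rightarrow> 'a) \<Rightarrow> bool" where
  "frob_eq n p X A \<longleftrightarrow> (\<forall>i<n. \<forall>j<n. (\<Sum>k<n. X i k ^ p * A k j) = X i j)"

end

theory Submission
  imports Defs "Jordan_Normal_Form.Determinant" "HOL-Computational_Algebra.Polynomial" "HOL-Number_Theory.Cong"
begin

section \<open>Characteristic p\<close>

lemma frob_add:
  fixes x y :: "'a::field"
  assumes "prime p" "CHAR('a) = p"
  shows "(x + y)^p = x^p + y^p"
proof -
  have "(x+y)^p = (\<Sum>k\<le>p. of_nat (p choose k) * x^k * y^(p-k))" by (rule binomial_ring)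
  also have "... = (\<Sum>k\<in>{0,p}. of_nat (p choose k) * x^k * y^(p-k))"
  proof (rule sum.mono_neutral_right)
    show "finite {..p}" by simp
    show "{0,p} \<subseteq> {..p}" by auto
    show "\<forall>i\<in>{..p} - {0,p}. of_nat (p choose i) * x^i * y^(p-i) = 0"
    proof
      fix i assume i: "i \<in> {..p} - {0,p}"
      hence "p dvd (p choose i)" using dvd_choose_prime[of i p] assms(1) by auto
      hence "of_nat (p choose i) = (0::'a)" using assms(2) of_nat_eq_0_iff_char_dvd by metis
      thus "of_nat (p choose i) * x^i * y^(p-i) = 0" by simp
    qed
  qed
  also have "... = x^p + y^p" using prime_gt_1_nat[OF assms(1)] by (simp add: add.commute)
  finally show ?thesis .
qed

lemma frob_neg:
  fixes x :: "'a::field"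
  assumes "prime p" "CHAR('a) = p"
  shows "(- x)^p = - (x^p)"
  using minus_power_prime_CHAR[of p x] assms by simp

lemma frob_diff:
  fixes x y :: "'a::field"
  assumes "prime p" "CHAR('a) = p"
  shows "(x - y)^p = x^p - y^p"
  using frob_add[OF assms, of x "-y"] frob_neg[OF assms, of y] by simp

lemma frob_sum:
  fixes f :: "'b \<Rightarrow> 'a::field"
  assumes "prime p" "CHAR('a) = p"
  shows "(\<Sum>i\<in>S. f i)^p = (\<Sum>i\<in>S. f i ^ p)"
proof (cases "finite S")
  case True
  then show ?thesis
    by (induction S rule: finite_induct) (use assms prime_gt_0_nat[OF assms(1)] frob_add[OF assms] in auto)
next
  case False
  then show ?thesis using prime_gt_0_nat[OF assms(1)] by simp
qed

lemma frob_of_nat: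
  assumes "prime p" "CHAR('a::field) = p"
  shows "(of_nat c :: 'a)^p = of_nat c"
proof (induction c)
  case 0
  then show ?case using prime_gt_0_nat[OF assms(1)] by simp
next
  case (Suc c)
  have "(of_nat (Suc c) :: 'a)^p = (1 + of_nat c)^p" by simp
  also have "... = 1 + of_nat c" using frob_add[OF assms, of 1 "of_nat c"] Suc by simp
  finally show ?case by simp
qed

lemma of_nat_inj_CHAR:
  assumes "CHAR('a::field) = p" "a < p" "b < p" "(of_nat a :: 'a) = of_nat b"
  shows "a = b"
proof -
  have "[a = b] (mod p)" using assms of_nat_eq_iff_cong_CHAR[of a b, where 'a='a] by simp
  thus ?thesis using assms(2,3) by (simp add: cong_def)
qed

lemma of_nat_mod_CHAR:
  assumes "CHAR('a::field) = p"
  shows "(of_nat (x mod p) :: 'a) = of_nat x"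
proof -
  have "x = x mod p + p * (x div p)" by simp
  hence "(of_nat x :: 'a) = of_nat (x mod p) + of_nat p * of_nat (x div p)"
    by (metis of_nat_add of_nat_mult)
  thus ?thesis using assms of_nat_CHAR[where 'a='a] by simp
qed

lemma frob_fixed:
  assumes "prime p" "CHAR('a::field) = p"
  shows "{x::'a. x^p = x} = of_nat ` {..<p}"
proof -
  have p2: "p \<ge> 2" using assms(1) prime_ge_2_nat by blast
  define P :: "'a poly" where "P = monom 1 p + (- [:0,1:])"
  have dP: "degree P = p" unfolding P_def using p2
    by (subst degree_add_eq_left) (auto simp: degree_monom_eq)
  hence "P \<noteq> 0" using p2 by auto
  have ev: "poly P x = x^p - x" for x unfolding P_def by (simp add: poly_monom)
  have sub: "of_nat ` {..<p} \<subseteq> {x::'a. x^p = x}" using frob_of_nat[OF assms] by auto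
  have eq: "{x::'a. x^p = x} = {x. poly P x = 0}" using ev by auto
  have fin: "finite {x::'a. x^p = x}" unfolding eq by (rule poly_roots_finite[OF \<open>P \<noteq> 0\<close>])
  have c1: "card {x::'a. x^p = x} \<le> p" unfolding eq using card_poly_roots_bound[OF \<open>P \<noteq> 0\<close>] dP by simp
  have inj: "inj_on (of_nat :: nat \<Rightarrow> 'a) {..<p}"
    by (rule inj_onI) (use of_nat_inj_CHAR[OF assms(2)] in auto)
  have c2: "card (of_nat ` {..<p} :: 'a set) = p" using card_image[OF inj] by simp
  show ?thesis using card_subset_eq[OF fin sub] c1 c2 card_mono[OF fin sub] by simp
qed

section \<open>Automorphisms\<close>

context fixes K :: "'a::field set" and \<sigma> :: "'a \<Rightarrow> 'a"
  assumes s: "\<sigma> \<in> field_auts_fixing K"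
begin
lemma aut_add: "\<sigma> (x + y) = \<sigma> x + \<sigma> y" using s unfolding field_auts_fixing_def by auto
lemma aut_mult: "\<sigma> (x * y) = \<sigma> x * \<sigma> y" using s unfolding field_auts_fixing_def by auto
lemma aut_one: "\<sigma> 1 = 1" using s unfolding field_auts_fixing_def by auto
lemma aut_K: "x \<in> K \<Longrightarrow> \<sigma> x = x" using s unfolding field_auts_fixing_def by auto
lemma aut_bij: "bij \<sigma>" using s unfolding field_auts_fixing_def by auto
lemma aut_zero: "\<sigma> 0 = 0" using aut_add[of 0 0] add_cancel_right_right[of "\<sigma> 0" "\<sigma> 0"] by simp
lemma aut_uminus: "\<sigma> (- x) = - \<sigma> x" using aut_add[of x "-x"] aut_zero by (metis neg_eq_iff_add_eq_0 add.right_inverse)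
lemma aut_diff: "\<sigma> (x - y) = \<sigma> x - \<sigma> y" using aut_add[of x "-y"] aut_uminus[of y] by simp
lemma aut_power: "\<sigma> (x ^ m) = \<sigma> x ^ m" by (induction m) (auto simp: aut_one aut_mult)
lemma aut_sum: "\<sigma> (\<Sum>i\<in>S. f i) = (\<Sum>i\<in>S. \<sigma> (f i))"
  by (induction S rule: infinite_finite_induct) (auto simp: aut_zero aut_add)
lemma aut_of_nat: "\<sigma> (of_nat m) = of_nat m" by (induction m) (auto simp: aut_zero aut_one aut_add)
lemma aut_inverse: "\<sigma> (inverse x) = inverse (\<sigma> x)"
proof (cases "x = 0")
  case True then show ?thesis by (simp add: aut_zero)
next
  case False
  have "\<sigma> x * \<sigma> (inverse x) = 1" using aut_mult[of x "inverse x"] aut_one False by simp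
  then show ?thesis by (metis inverse_unique)
qed
lemma aut_divide: "\<sigma> (x / y) = \<sigma> x / \<sigma> y" by (simp add: divide_inverse aut_mult aut_inverse)
lemma aut_inj: "\<sigma> x = \<sigma> y \<Longrightarrow> x = y" using aut_bij by (meson bij_def injD)
end

lemma auts_id: "id \<in> field_auts_fixing K" unfolding field_auts_fixing_def by auto

lemma auts_comp: "\<sigma> \<in> field_auts_fixing K \<Longrightarrow> \<tau> \<in> field_auts_fixing K \<Longrightarrow> \<sigma> \<circ> \<tau> \<in> field_auts_fixing K"
  unfolding field_auts_fixing_def by (auto intro: bij_comp)

lemma auts_inv:
  assumes s: "\<sigma> \<in> field_auts_fixing K"
  shows "inv_into UNIV \<sigma> \<in> field_auts_fixing K"
proof -
  have b: "bij \<sigma>" by (rule aut_bij[OF s])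
  have si: "\<sigma> (inv_into UNIV \<sigma> x) = x" for x using surj_f_inv_f[OF bij_is_surj[OF b]] by simp
  have is': "inv_into UNIV \<sigma> (\<sigma> x) = x" for x using inv_f_f[OF bij_is_inj[OF b]] by simp
  have "inv_into UNIV \<sigma> (x + y) = inv_into UNIV \<sigma> x + inv_into UNIV \<sigma> y" for x y
    using aut_add[OF s, of "inv_into UNIV \<sigma> x" "inv_into UNIV \<sigma> y"] si is' by metis
  moreover have "inv_into UNIV \<sigma> (x * y) = inv_into UNIV \<sigma> x * inv_into UNIV \<sigma> y" for x y
    using aut_mult[OF s, of "inv_into UNIV \<sigma> x" "inv_into UNIV \<sigma> y"] si is' by metis
  moreover have "inv_into UNIV \<sigma> 1 = 1" using aut_one[OF s] is' by metis
  moreover have "\<forall>x\<in>K. inv_into UNIV \<sigma> x = x" using aut_K[OF s] is' by metis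
  ultimately show ?thesis using bij_imp_bij_inv[OF b] unfolding field_auts_fixing_def by auto
qed

lemma auts_inv_comp: "\<sigma> \<in> field_auts_fixing K \<Longrightarrow> inv_into UNIV \<sigma> \<circ> \<sigma> = id"
  using aut_bij by (metis bij_is_inj inv_o_cancel)
lemma auts_comp_inv: "\<sigma> \<in> field_auts_fixing K \<Longrightarrow> \<sigma> \<circ> inv_into UNIV \<sigma> = id"
  using aut_bij by (metis bij_is_surj surj_iff)


definition vge :: "('a \<Rightarrow> int) \<Rightarrow> 'a::field \<Rightarrow> int \<Rightarrow> bool" where
  "vge v x N \<longleftrightarrow> x = 0 \<or> N \<le> v x"

locale vfield =
  fixes K k :: "'a::field set" and v :: "'a \<Rightarrow> int" and t :: 'a and p :: nat
  assumes prime_p: "prime p" and char_p: "CHAR('a) = p"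
    and subK: "is_subfield K" and val: "normalized_discrete_valuation K v"
    and compl: "v_complete K v" and cfield: "coefficient_field K v k"
    and aclosed: "algebraically_closed_subfield k"
    and tK: "t \<in> K" and t0: "t \<noteq> 0" and vt: "v t = -1"
begin

lemma K0: "0 \<in> K" and K1: "1 \<in> K" using subK unfolding is_subfield_def by auto
lemma Kadd: "x \<in> K \<Longrightarrow> y \<in> K \<Longrightarrow> x + y \<in> K" using subK unfolding is_subfield_def by auto
lemma Kdiff: "x \<in> K \<Longrightarrow> y \<in> K \<Longrightarrow> x - y \<in> K" using subK unfolding is_subfield_def by auto
lemma Kmult: "x \<in> K \<Longrightarrow> y \<in> K \<Longrightarrow> x * y \<in> K" using subK unfolding is_subfield_def by auto
lemma Kuminus: "x \<in> K \<Longrightarrow> - x \<in> K" using Kdiff[OF K0, of x] by simp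
lemma Kinv: "x \<in> K \<Longrightarrow> inverse x \<in> K"
  using subK K0 unfolding is_subfield_def by (cases "x = 0") auto
lemma Kpower: "x \<in> K \<Longrightarrow> x ^ m \<in> K" by (induction m) (auto intro: Kmult K1)
lemma Kpowi: "x \<in> K \<Longrightarrow> x powi m \<in> K"
proof (cases "m \<ge> 0")
  case True
  assume "x \<in> K" then show ?thesis using True by (simp add: power_int_nonneg_exp Kpower)
next
  case False
  assume x: "x \<in> K"
  have "x powi m = inverse (x powi (- m))" using power_int_minus[of x "-m"] by simp
  also have "... = inverse (x ^ nat (-m))" using False by (simp add: power_int_nonneg_exp)
  finally show ?thesis using Kinv Kpower x by simp
qed
lemma Ksum: "(\<And>i. i \<in> S \<Longrightarrow> f i \<in> K) \<Longrightarrow> sum f S \<in> K"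
  by (induction S rule: infinite_finite_induct) (auto intro: Kadd K0)

lemma ksub: "is_subfield k" and kK: "k \<subseteq> K" using cfield unfolding coefficient_field_def by auto
lemma k0: "0 \<in> k" and k1: "1 \<in> k" using ksub unfolding is_subfield_def by auto
lemma kadd: "x \<in> k \<Longrightarrow> y \<in> k \<Longrightarrow> x + y \<in> k" using ksub unfolding is_subfield_def by auto
lemma kdiff: "x \<in> k \<Longrightarrow> y \<in> k \<Longrightarrow> x - y \<in> k" using ksub unfolding is_subfield_def by auto
lemma kmult: "x \<in> k \<Longrightarrow> y \<in> k \<Longrightarrow> x * y \<in> k" using ksub unfolding is_subfield_def by auto
lemma kuminus: "x \<in> k \<Longrightarrow> - x \<in> k" using kdiff[OF k0, of x] by simp
lemma kv0: "a \<in> k \<Longrightarrow> a \<noteq> 0 \<Longrightarrow> v a = 0" using cfield unfolding coefficient_field_def by auto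
lemma kres: "u \<in> K \<Longrightarrow> u \<noteq> 0 \<Longrightarrow> v u = 0 \<Longrightarrow> \<exists>a\<in>k. u = a \<or> v (u - a) > 0"
  using cfield unfolding coefficient_field_def by auto

lemma vmult: "x \<in> K \<Longrightarrow> y \<in> K \<Longrightarrow> x \<noteq> 0 \<Longrightarrow> y \<noteq> 0 \<Longrightarrow> v (x * y) = v x + v y"
  using val unfolding normalized_discrete_valuation_def by auto
lemma vadd: "x \<in> K \<Longrightarrow> y \<in> K \<Longrightarrow> x \<noteq> 0 \<Longrightarrow> y \<noteq> 0 \<Longrightarrow> x + y \<noteq> 0 \<Longrightarrow> min (v x) (v y) \<le> v (x + y)"
  using val unfolding normalized_discrete_valuation_def by auto
lemma v1: "v 1 = 0" using vmult[OF K1 K1] by simp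
lemma vm1: "v (-1) = 0" using vmult[OF Kuminus[OF K1] Kuminus[OF K1]] v1 by simp
lemma vuminus: "x \<in> K \<Longrightarrow> x \<noteq> 0 \<Longrightarrow> v (- x) = v x"
  using vmult[OF Kuminus[OF K1], of x] vm1 by simp
lemma vinv: "x \<in> K \<Longrightarrow> x \<noteq> 0 \<Longrightarrow> v (inverse x) = - v x"
  using vmult[of x "inverse x"] Kinv v1 by simp
lemma vpow: "x \<in> K \<Longrightarrow> x \<noteq> 0 \<Longrightarrow> v (x ^ m) = int m * v x"
  by (induction m) (auto simp: v1 vmult Kpower algebra_simps)
lemma vtpowi: "v (t powi m) = - m"
proof (cases "m \<ge> 0")
  case True
  then show ?thesis using vpow[OF tK t0, of "nat m"] vt by (simp add: power_int_nonneg_exp)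
next
  case False
  have "t powi m = inverse (t powi (- m))" using power_int_minus[of t "-m"] by simp
  also have "... = inverse (t ^ nat (-m))" using False by (simp add: power_int_nonneg_exp)
  finally show ?thesis using vinv[OF Kpower[OF tK], of "nat (-m)"] vpow[OF tK t0, of "nat (-m)"] vt t0 False
    by simp
qed
lemma tpowi0: "t powi m \<noteq> 0" using t0 by simp

abbreviation vg where "vg \<equiv> vge v"

lemma vge_add: "x \<in> K \<Longrightarrow> y \<in> K \<Longrightarrow> vg x N \<Longrightarrow> vg y N \<Longrightarrow> vg (x + y) N"
  unfolding vge_def using vadd[of x y] by fastforce
lemma vge_uminus: "x \<in> K \<Longrightarrow> vg (- x) N \<longleftrightarrow> vg x N"
  unfolding vge_def by (cases "x = 0") (auto simp: vuminus)
lemma vge_diff: "x \<in> K \<Longrightarrow> y \<in> K \<Longrightarrow> vg x N \<Longrightarrow> vg y N \<Longrightarrow> vg (x - y) N"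
  using vge_add[of x "-y" N] vge_uminus[of y N] Kuminus[of y] by simp
lemma vge_sum: "(\<And>i. i \<in> S \<Longrightarrow> f i \<in> K \<and> vg (f i) N) \<Longrightarrow> vg (sum f S) N"
proof (induction S rule: infinite_finite_induct)
  case (insert x F)
  then show ?case using vge_add[of "f x" "sum f F" N] Ksum[of F f] by auto
qed (auto simp: vge_def)
lemma vge_mult: "x \<in> K \<Longrightarrow> y \<in> K \<Longrightarrow> vg x a \<Longrightarrow> vg y b \<Longrightarrow> vg (x * y) (a + b)"
  unfolding vge_def by (cases "x = 0"; cases "y = 0") (auto simp: vmult)
lemma vge_mono: "vg x a \<Longrightarrow> b \<le> a \<Longrightarrow> vg x b" unfolding vge_def by auto
lemma vge_pow: "x \<in> K \<Longrightarrow> vg x a \<Longrightarrow> vg (x ^ m) (int m * a)"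
proof (induction m)
  case 0 then show ?case by (simp add: vge_def v1)
next
  case (Suc m)
  then have "vg (x * x ^ m) (a + int m * a)" using vge_mult[of x "x^m" a "int m * a"] Kpower by auto
  then show ?case by (simp add: algebra_simps)
qed
lemma vge_zero: "(\<And>N. vg x N) \<Longrightarrow> x = 0"
proof -
  assume "\<And>N. vg x N"
  from this[of "v x + 1"] show "x = 0" unfolding vge_def by auto
qed
lemma v_mon: "a \<in> k \<Longrightarrow> a \<noteq> 0 \<Longrightarrow> a * t powi (- l) \<noteq> 0 \<and> v (a * t powi (- l)) = l"
  using vmult[of a "t powi (-l)"] kK kv0[of a] vtpowi[of "-l"] Kpowi[OF tK] tpowi0 by auto
lemma vge_mon: "a \<in> k \<Longrightarrow> vg (a * t powi (- l)) l"
  using v_mon[of a l] unfolding vge_def by (cases "a = 0") auto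
lemma mon_K: "a \<in> k \<Longrightarrow> a * t powi (- l) \<in> K" using kK Kmult Kpowi[OF tK] by auto
lemma v_strict:
  assumes x: "x \<in> K" "x \<noteq> 0" and y: "y \<in> K" "vg y (v x + 1)"
  shows "x + y \<noteq> 0 \<and> v (x + y) = v x"
proof (cases "y = 0")
  case True then show ?thesis using x by simp
next
  case False
  then have vy: "v y > v x" using y unfolding vge_def by auto
  have nz: "x + y \<noteq> 0"
  proof
    assume "x + y = 0"
    then have "y = - x" by (simp add: eq_neg_iff_add_eq_0 add.commute)
    then show False using vuminus[OF x] vy by simp
  qed
  have a: "min (v x) (v y) \<le> v (x + y)" using vadd[OF x(1) y(1) x(2) False nz] .
  have b: "min (v (x + y)) (v (- y)) \<le> v x"
    using vadd[OF Kadd[OF x(1) y(1)] Kuminus[OF y(1)] nz] False x by simp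
  show ?thesis using a b vy vuminus[OF y(1) False] nz by linarith
qed

lemma conv_iff: "v_converges v f y \<longleftrightarrow> (\<forall>N. \<exists>M0. \<forall>M\<ge>M0. vg (f M - y) N)"
  unfolding v_converges_def vge_def by simp
lemma cauchy_iff: "v_cauchy v f \<longleftrightarrow> (\<forall>N. \<exists>M0. \<forall>a\<ge>M0. \<forall>b\<ge>M0. vg (f a - f b) N)"
  unfolding v_cauchy_def vge_def by simp

end

lemma sum_ifeq: "finite S \<Longrightarrow> (\<Sum>i\<in>S. (if i = j then u else 0) * f i) = (if j \<in> S then u * f j else (0::'a::comm_ring_1))"
proof -
  assume S: "finite S"
  have "(\<Sum>i\<in>S. (if i = j then u else 0) * f i) = (\<Sum>i\<in>S. if i = j then u * f i else 0)"
    by (intro sum.cong) auto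
  also have "... = (if j \<in> S then u * f j else 0)" using sum.delta'[OF S, of j "\<lambda>i. u * f i"] by (simp add: eq_commute)
  finally show ?thesis .
qed

context vfield begin

lemma p2: "p \<ge> 2" using prime_p prime_ge_2_nat by blast

lemma exp_unique:
  assumes x: "x \<in> K" and e1: "is_expansion v k t x c" and e2: "is_expansion v k t x c'"
  shows "c = c'"
proof (rule ccontr)
  assume ne: "c \<noteq> c'"
  define d where "d l = c l - c' l" for l
  from e1 obtain N1 where c1: "\<forall>l. c l \<in> k" and n1: "\<forall>l<N1. c l = 0"
    and cv1: "v_converges v (\<lambda>M. \<Sum>l\<in>{- int M..int M}. c l * t powi (- l)) x"
    unfolding is_expansion_def by auto
  from e2 obtain N2 where c2: "\<forall>l. c' l \<in> k" and n2: "\<forall>l<N2. c' l = 0"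
    and cv2: "v_converges v (\<lambda>M. \<Sum>l\<in>{- int M..int M}. c' l * t powi (- l)) x"
    unfolding is_expansion_def by auto
  have dk: "d l \<in> k" for l using c1 c2 kdiff d_def by auto
  define N0 where "N0 = min N1 N2"
  have dz: "l < N0 \<Longrightarrow> d l = 0" for l using n1 n2 by (auto simp: d_def N0_def)
  obtain l1 where dl1: "d l1 \<noteq> 0" using ne unfolding d_def by (metis ext eq_iff_diff_eq_0)
  have l1ge: "l1 \<ge> N0" using dz dl1 by force
  have ex: "d (N0 + int (nat (l1 - N0))) \<noteq> 0" using l1ge dl1 by simp
  define m0 where "m0 = (LEAST m::nat. d (N0 + int m) \<noteq> 0)"
  define l0 where "l0 = N0 + int m0"
  have dl0: "d l0 \<noteq> 0" unfolding l0_def m0_def by (rule LeastI[where P="\<lambda>m. d (N0 + int m) \<noteq> 0", OF ex])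
  have below: "d l = 0" if "l < l0" for l
  proof (cases "l < N0")
    case True thus ?thesis by (rule dz)
  next
    case False
    then have e: "l = N0 + int (nat (l - N0))" by simp
    have "nat (l - N0) < m0" using that False l0_def by linarith
    then show ?thesis using not_less_Least[of "nat (l - N0)" "\<lambda>m. d (N0 + int m) \<noteq> 0"] e
      unfolding m0_def by metis
  qed
  from cv1 obtain M1 where M1: "\<forall>M\<ge>M1. vg ((\<Sum>l\<in>{- int M..int M}. c l * t powi (- l)) - x) (l0 + 1)"
    unfolding conv_iff by blast
  from cv2 obtain M2 where M2: "\<forall>M\<ge>M2. vg ((\<Sum>l\<in>{- int M..int M}. c' l * t powi (- l)) - x) (l0 + 1)"
    unfolding conv_iff by blast
  define M where "M = max (max M1 M2) (nat \<bar>l0\<bar>)"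
  define S where "S = {- int M..int M}"
  have h1: "vg ((\<Sum>l\<in>S. c l * t powi (- l)) - x) (l0+1)" using M1 unfolding M_def S_def by auto
  have h2: "vg ((\<Sum>l\<in>S. c' l * t powi (- l)) - x) (l0+1)" using M2 unfolding M_def S_def by auto
  have iK1: "(\<Sum>l\<in>S. c l * t powi (- l)) \<in> K" using c1 mon_K by (intro Ksum) auto
  have iK2: "(\<Sum>l\<in>S. c' l * t powi (- l)) \<in> K" using c2 mon_K by (intro Ksum) auto
  have D0: "vg (((\<Sum>l\<in>S. c l * t powi (- l)) - x) - ((\<Sum>l\<in>S. c' l * t powi (- l)) - x)) (l0+1)"
    using vge_diff[OF Kdiff[OF iK1 x] Kdiff[OF iK2 x] h1 h2] .
  have eq: "((\<Sum>l\<in>S. c l * t powi (- l)) - x) - ((\<Sum>l\<in>S. c' l * t powi (- l)) - x) = (\<Sum>l\<in>S. d l * t powi (- l))"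
    by (simp add: d_def sum_subtractf[symmetric] left_diff_distrib)
  have D: "vg (\<Sum>l\<in>S. d l * t powi (- l)) (l0+1)" using D0 eq by simp
  have l0S: "l0 \<in> S" using M_def S_def by auto
  have fS: "finite S" unfolding S_def by simp
  have spl: "(\<Sum>l\<in>S. d l * t powi (- l)) = d l0 * t powi (- l0) + (\<Sum>l\<in>S - {l0}. d l * t powi (- l))"
    using sum.remove[OF fS l0S] by simp
  have rest: "vg (\<Sum>l\<in>S - {l0}. d l * t powi (- l)) (l0 + 1)"
  proof (rule vge_sum)
    fix l assume l: "l \<in> S - {l0}"
    show "d l * t powi (- l) \<in> K \<and> vg (d l * t powi (- l)) (l0 + 1)"
    proof (cases "l < l0")
      case True then show ?thesis using below[OF True] K0 by (simp add: vge_def)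
    next
      case False
      then have "l \<ge> l0 + 1" using l by auto
      then show ?thesis using mon_K[OF dk] vge_mon[OF dk, of l] vge_mono by blast
    qed
  qed
  have restK: "(\<Sum>l\<in>S - {l0}. d l * t powi (- l)) \<in> K" using mon_K[OF dk] by (intro Ksum) auto
  have vm: "d l0 * t powi (- l0) \<noteq> 0 \<and> v (d l0 * t powi (- l0)) = l0" using v_mon[OF dk dl0] .
  have st: "d l0 * t powi (- l0) + (\<Sum>l\<in>S - {l0}. d l * t powi (- l)) \<noteq> 0 \<and>
      v (d l0 * t powi (- l0) + (\<Sum>l\<in>S - {l0}. d l * t powi (- l))) = l0"
    using v_strict[OF mon_K[OF dk] conjunct1[OF vm] restK] rest vm by simp
  show False using D st unfolding spl vge_def by simp
qed

lemma expansion_finite: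
  assumes F: "finite F" and dk: "\<forall>l\<in>F. d l \<in> k"
  shows "is_expansion v k t (\<Sum>l\<in>F. d l * t powi (- l)) (\<lambda>l. if l \<in> F then d l else 0)"
proof -
  define B where "B = Max (insert 0 (abs ` F))"
  have B: "l \<in> F \<Longrightarrow> \<bar>l\<bar> \<le> B" for l unfolding B_def using F by (intro Max_ge) auto
  have "(if l \<in> F then d l else 0) \<in> k" for l using dk k0 by auto
  moreover have "\<exists>N. \<forall>l<N. (if l \<in> F then d l else 0) = 0"
    by (rule exI[of _ "- B"]) (use B in force)
  moreover have "\<exists>M0. \<forall>M\<ge>M0. vg ((\<Sum>l\<in>{- int M..int M}. (if l \<in> F then d l else 0) * t powi (- l))
       - (\<Sum>l\<in>F. d l * t powi (- l))) N" for N
  proof (intro exI[of _ "nat B"] allI impI)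
    fix M assume M: "nat B \<le> M"
    have sub: "F \<subseteq> {- int M..int M}" using B M by force
    have "(\<Sum>l\<in>{- int M..int M}. (if l \<in> F then d l else 0) * t powi (- l))
        = (\<Sum>l\<in>{- int M..int M}. if l \<in> F then d l * t powi (- l) else 0)"
      by (intro sum.cong) auto
    also have "... = (\<Sum>l\<in>{- int M..int M} \<inter> F. d l * t powi (- l))"
      by (simp add: sum.inter_restrict)
    also have "{- int M..int M} \<inter> F = F" using sub by auto
    finally show "vg ((\<Sum>l\<in>{- int M..int M}. (if l \<in> F then d l else 0) * t powi (- l))
       - (\<Sum>l\<in>F. d l * t powi (- l))) N" by (simp add: vge_def)
  qed
  ultimately show ?thesis unfolding is_expansion_def conv_iff by blast
qed

lemma coef_finite:
  assumes F: "finite F" and dk: "\<forall>l\<in>F. d l \<in> k"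
  shows "coef v k t (\<Sum>l\<in>F. d l * t powi (- l)) l = (if l \<in> F then d l else 0)"
proof -
  have yK: "(\<Sum>l\<in>F. d l * t powi (- l)) \<in> K" using dk mon_K by (intro Ksum) auto
  have E: "is_expansion v k t (\<Sum>l\<in>F. d l * t powi (- l)) (\<lambda>l. if l \<in> F then d l else 0)"
    by (rule expansion_finite[OF F dk])
  have "(THE c. is_expansion v k t (\<Sum>l\<in>F. d l * t powi (- l)) c) = (\<lambda>l. if l \<in> F then d l else 0)"
  proof (rule the_equality)
    show "is_expansion v k t (\<Sum>l\<in>F. d l * t powi (- l)) (\<lambda>l. if l \<in> F then d l else 0)" by (rule E)
  next
    fix c assume "is_expansion v k t (\<Sum>l\<in>F. d l * t powi (- l)) c"
    then show "c = (\<lambda>l. if l \<in> F then d l else 0)" using exp_unique[OF yK E] by metis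
  qed
  then show ?thesis unfolding coef_def by simp
qed

lemma vg_tpowi: "vg (t powi m) (- m)" unfolding vge_def using vtpowi by simp

lemma greedy: "x \<in> K \<Longrightarrow> vg x (- int d) \<Longrightarrow>
   \<exists>c. (\<forall>l. c l \<in> k) \<and> vg (x - (\<Sum>l\<in>{- int d..<0}. c l * t powi (- l))) 0"
proof (induction d arbitrary: x)
  case 0 then show ?case by (intro exI[of _ "\<lambda>_. 0"]) (auto simp: k0)
next
  case (Suc d)
  define L where "L = - int (Suc d)"
  have ivl: "{- int (Suc d)..<0} = insert L {- int d..<0}" by (auto simp: L_def)
  have nin: "L \<notin> {- int d..<0}" by (auto simp: L_def)
  have spl: "(\<Sum>l\<in>{- int (Suc d)..<0}. f l) = f L + (\<Sum>l\<in>{- int d..<0}. f l)" for f :: "int \<Rightarrow> 'a"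
    unfolding ivl using nin by simp
  show ?case
  proof (cases "vg x (- int d)")
    case True
    obtain c where c: "\<forall>l. c l \<in> k" "vg (x - (\<Sum>l\<in>{- int d..<0}. c l * t powi (- l))) 0"
      using Suc.IH[OF Suc.prems(1) True] by blast
    define c' where "c' = c(L := 0)"
    have s2: "(\<Sum>l\<in>{- int d..<0}. c' l * t powi (- l)) = (\<Sum>l\<in>{- int d..<0}. c l * t powi (- l))"
      using nin by (intro sum.cong) (auto simp: c'_def)
    have "(\<Sum>l\<in>{- int (Suc d)..<0}. c' l * t powi (- l)) = (\<Sum>l\<in>{- int d..<0}. c l * t powi (- l))"
      unfolding spl s2 by (simp add: c'_def)
    then show ?thesis using c k0 by (intro exI[of _ c']) (auto simp: c'_def)
  next
    case False
    then have x0: "x \<noteq> 0" and vx: "v x = - int (Suc d)" using Suc.prems(2) unfolding vge_def by auto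
    define y where "y = x * t powi (- int (Suc d))"
    have yK: "y \<in> K" using Suc.prems(1) Kmult Kpowi tK y_def by auto
    have y0: "y \<noteq> 0" unfolding y_def using x0 tpowi0[of "- int (Suc d)"] by simp
    have vy: "v y = 0" using vmult[OF Suc.prems(1) Kpowi[OF tK] x0 tpowi0] vtpowi vx y_def by simp
    obtain a where a: "a \<in> k" "y = a \<or> v (y - a) > 0" using kres[OF yK y0 vy] by blast
    have ya: "vg (y - a) 1" using a unfolding vge_def by auto
    have xeq: "x - a * t powi (int (Suc d)) = (y - a) * t powi (int (Suc d))"
    proof -
      have "t powi (- int (Suc d)) * t powi (int (Suc d)) = t powi (- int (Suc d) + int (Suc d))"
        by (rule power_int_add[symmetric]) (use t0 in simp)
      then have "t powi (- int (Suc d)) * t powi (int (Suc d)) = 1" by simp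
      then show ?thesis unfolding y_def by (simp add: algebra_simps)
    qed
    define x' where "x' = x - a * t powi (int (Suc d))"
    have aK: "a \<in> K" using a kK by auto
    have x'K: "x' \<in> K" unfolding x'_def using Suc.prems(1) aK Kdiff Kmult Kpowi[OF tK] by auto
    have vx': "vg x' (- int d)"
    proof -
      have "vg ((y - a) * t powi (int (Suc d))) (1 + - int (Suc d))"
        using vge_mult[OF Kdiff[OF yK aK] Kpowi[OF tK] ya vg_tpowi] .
      then show ?thesis unfolding x'_def xeq by simp
    qed
    obtain c where c: "\<forall>l. c l \<in> k" "vg (x' - (\<Sum>l\<in>{- int d..<0}. c l * t powi (- l))) 0"
      using Suc.IH[OF x'K vx'] by blast
    define c' where "c' = c(L := a)"
    have s2: "(\<Sum>l\<in>{- int d..<0}. c' l * t powi (- l)) = (\<Sum>l\<in>{- int d..<0}. c l * t powi (- l))"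
      using nin by (intro sum.cong) (auto simp: c'_def)
    have "(\<Sum>l\<in>{- int (Suc d)..<0}. c' l * t powi (- l)) = a * t powi (int (Suc d)) + (\<Sum>l\<in>{- int d..<0}. c l * t powi (- l))"
      unfolding spl s2 by (simp add: c'_def L_def add.commute)
    then have "x - (\<Sum>l\<in>{- int (Suc d)..<0}. c' l * t powi (- l)) = x' - (\<Sum>l\<in>{- int d..<0}. c l * t powi (- l))"
      unfolding x'_def by simp
    then show ?thesis using c a by (intro exI[of _ c']) (auto simp: c'_def)
  qed
qed

lemma root_k:
  assumes "d > 0" "\<forall>i\<le>d. c i \<in> k" "c d \<noteq> 0" shows "\<exists>x\<in>k. (\<Sum>i\<le>d. c i * x ^ i) = 0"
  using aclosed assms unfolding algebraically_closed_subfield_def by blast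

lemma ifk: "u \<in> k \<Longrightarrow> w \<in> k \<Longrightarrow> (if P then u else w) \<in> k" by auto

lemma as_root_k:
  assumes a: "\<alpha> \<in> k" shows "\<exists>\<beta>\<in>k. \<beta> ^ p - \<beta> = \<alpha>"
proof -
  define c where "c i = (if i = p then 1 else 0) - (if i = 1 then 1 else 0) - (if i = 0 then \<alpha> else (0::'a))" for i
  have ck: "\<forall>i\<le>p. c i \<in> k" unfolding c_def using a k0 k1 by (blast intro: kdiff ifk)
  have cp: "c p \<noteq> 0" using p2 by (simp add: c_def)
  obtain \<beta> where b: "\<beta> \<in> k" "(\<Sum>i\<le>p. c i * \<beta> ^ i) = 0" using root_k[OF _ ck cp] p2 by auto
  have "(\<Sum>i\<le>p. c i * \<beta> ^ i) = (\<Sum>i\<le>p. (if i = p then 1 else 0) * \<beta> ^ i) - (\<Sum>i\<le>p. (if i = 1 then 1 else 0) * \<beta> ^ i)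
      - (\<Sum>i\<le>p. (if i = 0 then \<alpha> else 0) * \<beta> ^ i)"
    unfolding c_def by (simp add: left_diff_distrib sum_subtractf)
  also have "... = \<beta> ^ p - \<beta> - \<alpha>" using p2 by (simp only: sum_ifeq[OF finite_atMost]) simp
  finally show ?thesis using b by auto
qed

lemma pth_root_k:
  assumes a: "\<alpha> \<in> k" shows "\<exists>\<gamma>\<in>k. \<gamma> ^ p = \<alpha>"
proof -
  define c where "c i = (if i = p then 1 else 0) - (if i = 0 then \<alpha> else (0::'a))" for i
  have ck: "\<forall>i\<le>p. c i \<in> k" unfolding c_def using a k0 k1 by (blast intro: kdiff ifk)
  have cp: "c p \<noteq> 0" using p2 by (simp add: c_def)
  obtain \<beta> where b: "\<beta> \<in> k" "(\<Sum>i\<le>p. c i * \<beta> ^ i) = 0" using root_k[OF _ ck cp] p2 by auto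
  have "(\<Sum>i\<le>p. c i * \<beta> ^ i) = (\<Sum>i\<le>p. (if i = p then 1 else 0) * \<beta> ^ i)
      - (\<Sum>i\<le>p. (if i = 0 then \<alpha> else 0) * \<beta> ^ i)"
    unfolding c_def by (simp add: left_diff_distrib sum_subtractf)
  also have "... = \<beta> ^ p - \<alpha>" using p2 by (simp only: sum_ifeq[OF finite_atMost]) simp
  finally show ?thesis using b by auto
qed

end

context vfield begin

lemma hensel1:
  assumes m: "m \<in> K" "vg m 1"
  shows "\<exists>y\<in>K. y ^ p - y = m"
proof -
  define s where "s R = - (\<Sum>r<R. m ^ (p ^ r))" for R
  have sK: "s R \<in> K" for R unfolding s_def using m(1) by (intro Kuminus Ksum Kpower)
  have mp: "vg (m ^ (p ^ r)) (int r)" for r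
  proof -
    have "vg (m ^ (p ^ r)) (int (p ^ r) * 1)" by (rule vge_pow[OF m])
    moreover have "r \<le> p ^ r"
    proof -
      have "r < 2 ^ r" by (rule less_exp)
      also have "(2::nat) ^ r \<le> p ^ r" using p2 by (intro power_mono) auto
      finally show ?thesis by simp
    qed
    ultimately show ?thesis using vge_mono by fastforce
  qed
  have diffM: "vg (s a - s b) (int b)" if ba: "b \<le> a" for a b
  proof -
    have "(\<Sum>r<a. m ^ (p ^ r)) = (\<Sum>r<b. m ^ (p ^ r)) + (\<Sum>r\<in>{b..<a}. m ^ (p ^ r))"
      using sum.atLeastLessThan_concat[of 0 b a "\<lambda>r. m ^ (p ^ r)"] ba by (simp add: atLeast0LessThan)
    then have e: "s a - s b = - (\<Sum>r\<in>{b..<a}. m ^ (p ^ r))" unfolding s_def by simp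
    have "vg (\<Sum>r\<in>{b..<a}. m ^ (p ^ r)) (int b)"
    proof (rule vge_sum)
      fix r assume "r \<in> {b..<a}"
      then show "m ^ (p ^ r) \<in> K \<and> vg (m ^ (p ^ r)) (int b)" using mp[of r] Kpower[OF m(1)] vge_mono by auto
    qed
    moreover have inK: "(\<Sum>r\<in>{b..<a}. m ^ (p ^ r)) \<in> K" by (intro Ksum Kpower m(1))
    ultimately show ?thesis unfolding e using vge_uminus[OF inK] by simp
  qed
  have cauchy: "v_cauchy v s" unfolding cauchy_iff
  proof
    fix N
    show "\<exists>M0. \<forall>a\<ge>M0. \<forall>b\<ge>M0. vg (s a - s b) N"
    proof (intro exI[of _ "nat N"] allI impI)
      fix a b assume a: "nat N \<le> a" and b: "nat N \<le> b"
      show "vg (s a - s b) N"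
      proof (cases "b \<le> a")
        case True then show ?thesis using diffM[OF True] b vge_mono by fastforce
      next
        case False
        then have "vg (s b - s a) (int a)" using diffM by auto
        then have "vg (- (s b - s a)) (int a)" using vge_uminus Kdiff sK by blast
        then show ?thesis using a vge_mono by fastforce
      qed
    qed
  qed
  obtain y where yK: "y \<in> K" and conv: "v_converges v s y"
    using compl sK cauchy unfolding v_complete_def by blast
  have tele: "s R ^ p - s R = m - m ^ (p ^ R)" for R
  proof -
    have pw: "(m ^ (p ^ r)) ^ p = m ^ (p ^ Suc r)" for r by (simp add: power_mult[symmetric] mult.commute)
    have "s R ^ p = - (\<Sum>r<R. m ^ (p ^ Suc r))"
      unfolding s_def frob_neg[OF prime_p char_p] frob_sum[OF prime_p char_p] pw by simp
    moreover have "(\<Sum>r<R. m ^ (p ^ Suc r) - m ^ (p ^ r)) = m ^ (p ^ R) - m ^ (p ^ 0)"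
      by (rule sum_lessThan_telescope)
    ultimately show ?thesis unfolding s_def by (simp add: sum_subtractf) (metis minus_diff_eq)
  qed
  define z where "z = y ^ p - y - m"
  have zK: "z \<in> K" unfolding z_def using yK m(1) by (intro Kdiff Kpower)
  have "vg z N" for N
  proof -
    define N' where "N' = max N 0"
    obtain M0 where M0: "\<forall>M\<ge>M0. vg (s M - y) N'" using conv unfolding conv_iff by blast
    define R where "R = max M0 (nat N')"
    have e: "z = (y - s R) ^ p - (y - s R) - m ^ (p ^ R)"
    proof -
      have "y ^ p = (y - s R) ^ p + s R ^ p" using frob_add[OF prime_p char_p, of "y - s R" "s R"] by simp
      then show ?thesis unfolding z_def using tele[of R] by (simp add: algebra_simps)
    qed
    have yR: "y - s R \<in> K" using yK sK Kdiff by auto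
    have a1: "vg (y - s R) N'"
    proof -
      have "vg (s R - y) N'" using M0 R_def by auto
      then have "vg (- (s R - y)) N'" using vge_uminus Kdiff sK yK by blast
      then show ?thesis by simp
    qed
    have a2: "vg ((y - s R) ^ p) N'"
    proof -
      have "vg ((y - s R) ^ p) (int p * N')" by (rule vge_pow[OF yR a1])
      moreover have "N' \<le> int p * N'" using p2 N'_def by (simp add: mult_le_cancel_right1)
      ultimately show ?thesis using vge_mono by blast
    qed
    have a3: "vg (m ^ (p ^ R)) N'" using mp[of R] R_def N'_def vge_mono by fastforce
    have "vg ((y - s R) ^ p - (y - s R) - m ^ (p ^ R)) N'"
      by (rule vge_diff[OF Kdiff[OF Kpower[OF yR] yR] Kpower[OF m(1)] vge_diff[OF Kpower[OF yR] yR a2 a1] a3])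
    then have "vg z N'" using e by simp
    then show "vg z N" using N'_def vge_mono by fastforce
  qed
  then have "z = 0" by (rule vge_zero)
  then show ?thesis using yK z_def by auto
qed

lemma hensel:
  assumes x: "x \<in> K" "vg x 0"
  shows "\<exists>b\<in>K. b ^ p - b = x"
proof -
  obtain \<alpha> where a: "\<alpha> \<in> k" "vg (x - \<alpha>) 1"
  proof (cases "vg x 1")
    case True then show ?thesis using that[of 0] k0 by simp
  next
    case False
    then have "x \<noteq> 0" "v x = 0" using x(2) unfolding vge_def by auto
    then obtain a where "a \<in> k" "x = a \<or> v (x - a) > 0" using kres[OF x(1)] by blast
    then show ?thesis using that[of a] unfolding vge_def by auto
  qed
  obtain \<beta> where b: "\<beta> \<in> k" "\<beta> ^ p - \<beta> = \<alpha>" using as_root_k[OF a(1)] by blast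
  have aK: "\<alpha> \<in> K" using a(1) kK by auto
  obtain y where y: "y \<in> K" "y ^ p - y = x - \<alpha>" using hensel1[OF Kdiff[OF x(1) aK] a(2)] by blast
  have "(\<beta> + y) ^ p - (\<beta> + y) = x" using frob_add[OF prime_p char_p, of \<beta> y] b y by (simp add: algebra_simps)
  moreover have "\<beta> + y \<in> K" using kK b(1) y(1) Kadd by auto
  ultimately show ?thesis by blast
qed

lemma kill:
  "\<forall>c. (\<forall>l. c l \<in> k) \<longrightarrow> (\<exists>b\<in>K. \<exists>c'. (\<forall>l. c' l \<in> k) \<and> (\<forall>l. int p dvd l \<longrightarrow> c' l = 0) \<and>
     (\<Sum>l\<in>{- int d..<0}. c l * t powi (- l)) - (b ^ p - b) = (\<Sum>l\<in>{- int d..<0}. c' l * t powi (- l)))"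
proof (induction d)
  case 0
  have "(0::'a) ^ p = 0" using p2 by simp
  then show ?case using K0 k0 by (auto intro!: bexI[of _ 0] exI[of _ "\<lambda>_. 0"])
next
  case (Suc d)
  show ?case
  proof (intro allI impI)
    fix c :: "int \<Rightarrow> 'a" assume ck: "\<forall>l. c l \<in> k"
    define L where "L = - int (Suc d)"
    have ivl: "{- int (Suc d)..<0} = insert L {- int d..<0}" by (auto simp: L_def)
    have nin: "L \<notin> {- int d..<0}" by (auto simp: L_def)
    have spl: "(\<Sum>l\<in>{- int (Suc d)..<0}. f l) = f L + (\<Sum>l\<in>{- int d..<0}. f l)" for f :: "int \<Rightarrow> 'a"
      unfolding ivl using nin by simp
    show "\<exists>b\<in>K. \<exists>c'. (\<forall>l. c' l \<in> k) \<and> (\<forall>l. int p dvd l \<longrightarrow> c' l = 0) \<and>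
     (\<Sum>l\<in>{- int (Suc d)..<0}. c l * t powi (- l)) - (b ^ p - b) = (\<Sum>l\<in>{- int (Suc d)..<0}. c' l * t powi (- l))"
    proof (cases "int p dvd L")
      case False
      obtain b c' where b: "b \<in> K" and c': "\<forall>l. c' l \<in> k" "\<forall>l. int p dvd l \<longrightarrow> c' l = 0"
        and eq: "(\<Sum>l\<in>{- int d..<0}. c l * t powi (- l)) - (b ^ p - b) = (\<Sum>l\<in>{- int d..<0}. c' l * t powi (- l))"
        using Suc.IH ck by blast
      define c'' where "c'' = c'(L := c L)"
      have s2: "(\<Sum>l\<in>{- int d..<0}. c'' l * t powi (- l)) = (\<Sum>l\<in>{- int d..<0}. c' l * t powi (- l))"
        using nin by (intro sum.cong) (auto simp: c''_def)
      have "(\<Sum>l\<in>{- int (Suc d)..<0}. c l * t powi (- l)) - (b ^ p - b) = (\<Sum>l\<in>{- int (Suc d)..<0}. c'' l * t powi (- l))"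
        unfolding spl s2 using eq by (simp add: c''_def algebra_simps)
      moreover have "\<forall>l. c'' l \<in> k" using c' ck by (simp add: c''_def)
      moreover have "\<forall>l. int p dvd l \<longrightarrow> c'' l = 0" using c' False by (simp add: c''_def)
      ultimately show ?thesis using b by blast
    next
      case True
      then obtain m' where Lm: "L = int p * m'" by (auto elim: dvdE)
      have pp: "int p \<ge> 2" using p2 by simp
      have m'neg: "m' < 0"
      proof (rule ccontr)
        assume "\<not> m' < 0"
        then have "int p * m' \<ge> 0" using pp by simp
        then show False using Lm L_def by simp
      qed
      have "(int p - 2) * m' \<le> 0" using pp m'neg by (intro mult_nonneg_nonpos) auto
      then have "int p * m' \<le> 2 * m'" by (simp add: algebra_simps)
      then have m'ge: "m' \<ge> - int d" using Lm L_def m'neg by linarith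
      have m'in: "m' \<in> {- int d..<0}" using m'neg m'ge by auto
      obtain \<gamma> where g: "\<gamma> \<in> k" "\<gamma> ^ p = c L" using pth_root_k ck by blast
      define c2 where "c2 = c(m' := c m' + \<gamma>)"
      have c2k: "\<forall>l. c2 l \<in> k" using ck g kadd by (simp add: c2_def)
      obtain b2 c' where b2: "b2 \<in> K" and c': "\<forall>l. c' l \<in> k" "\<forall>l. int p dvd l \<longrightarrow> c' l = 0"
        and eq: "(\<Sum>l\<in>{- int d..<0}. c2 l * t powi (- l)) - (b2 ^ p - b2) = (\<Sum>l\<in>{- int d..<0}. c' l * t powi (- l))"
        using Suc.IH c2k by blast
      have sc2: "(\<Sum>l\<in>{- int d..<0}. c2 l * t powi (- l)) = (\<Sum>l\<in>{- int d..<0}. c l * t powi (- l)) + \<gamma> * t powi (- m')"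
      proof -
        have "(\<Sum>l\<in>{- int d..<0}. c2 l * t powi (- l)) = (\<Sum>l\<in>{- int d..<0}. c l * t powi (- l) + (if l = m' then \<gamma> * t powi (- l) else 0))"
          by (intro sum.cong) (auto simp: c2_def algebra_simps)
        also have "... = (\<Sum>l\<in>{- int d..<0}. c l * t powi (- l)) + \<gamma> * t powi (- m')"
          using m'in by (simp add: sum.distrib)
        finally show ?thesis .
      qed
      define b where "b = b2 + \<gamma> * t powi (- m')"
      have bK: "b \<in> K" using b2 mon_K[OF g(1)] Kadd b_def by auto
      have tp: "(t powi (- m')) ^ p = t powi (- L)" using Lm by (simp add: power_int_power' algebra_simps)
      have bp: "b ^ p = b2 ^ p + c L * t powi (- L)"
        unfolding b_def using frob_add[OF prime_p char_p] g(2) tp by (simp add: power_mult_distrib)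
      define c'' where "c'' = c'(L := 0)"
      have s2: "(\<Sum>l\<in>{- int d..<0}. c'' l * t powi (- l)) = (\<Sum>l\<in>{- int d..<0}. c' l * t powi (- l))"
        using nin by (intro sum.cong) (auto simp: c''_def)
      have "(\<Sum>l\<in>{- int (Suc d)..<0}. c l * t powi (- l)) - (b ^ p - b) = (\<Sum>l\<in>{- int (Suc d)..<0}. c'' l * t powi (- l))"
        unfolding spl s2 bp using eq sc2 by (simp add: c''_def b_def algebra_simps)
      moreover have "\<forall>l. c'' l \<in> k" using c' k0 by (simp add: c''_def)
      moreover have "\<forall>l. int p dvd l \<longrightarrow> c'' l = 0" using c' by (simp add: c''_def)
      ultimately show ?thesis using bK by blast
    qed
  qed
qed

lemma reduce:
  assumes a: "a \<in> K"
  shows "\<exists>b\<in>K. \<forall>l. (int p dvd l \<or> 0 \<le> l) \<longrightarrow> coef v k t (a + b - b ^ p) l = 0"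
proof -
  define d where "d = nat (- v a)"
  have d: "vg a (- int d)" unfolding vge_def d_def by auto
  obtain c where ck: "\<forall>l. c l \<in> k" and r: "vg (a - (\<Sum>l\<in>{- int d..<0}. c l * t powi (- l))) 0"
    using greedy[OF a d] by blast
  define S where "S = (\<Sum>l\<in>{- int d..<0}. c l * t powi (- l))"
  have SK: "S \<in> K" unfolding S_def using ck mon_K by (intro Ksum) auto
  obtain b1 where b1: "b1 \<in> K" "b1 ^ p - b1 = a - S" using hensel[OF Kdiff[OF a SK]] r S_def by blast
  obtain b2 c' where b2: "b2 \<in> K" and c': "\<forall>l. c' l \<in> k" "\<forall>l. int p dvd l \<longrightarrow> c' l = 0"
    and eq: "S - (b2 ^ p - b2) = (\<Sum>l\<in>{- int d..<0}. c' l * t powi (- l))"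
    using kill ck unfolding S_def by blast
  define b where "b = b1 + b2"
  have "a + b - b ^ p = (a - (b1 ^ p - b1)) - (b2 ^ p - b2)"
    unfolding b_def using frob_add[OF prime_p char_p, of b1 b2] by (simp add: algebra_simps)
  also have "... = S - (b2 ^ p - b2)" using b1(2) by simp
  finally have "a + b - b ^ p = (\<Sum>l\<in>{- int d..<0}. c' l * t powi (- l))" using eq by simp
  then have "coef v k t (a + b - b ^ p) l = (if l \<in> {- int d..<0} then c' l else 0)" for l
    using coef_finite[of "{- int d..<0}" c' l] c' by simp
  moreover have "b \<in> K" using b1 b2 Kadd b_def by auto
  ultimately show ?thesis using c' by (intro bexI[of _ b]) auto
qed

end

inductive_set spanV :: "'a::field set \<Rightarrow> (('a \<Rightarrow> 'a) \<Rightarrow> 'a) set" for E where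
  gen: "e \<in> E \<Longrightarrow> (\<lambda>\<sigma>. l * \<sigma> e) \<in> spanV E"
| add: "f \<in> spanV E \<Longrightarrow> g \<in> spanV E \<Longrightarrow> (\<lambda>\<sigma>. f \<sigma> + g \<sigma>) \<in> spanV E"

lemma V_scale: "f \<in> spanV E \<Longrightarrow> (\<lambda>\<sigma>. c * f \<sigma>) \<in> spanV E"
proof (induction rule: spanV.induct)
  case (gen e l)
  then show ?case using spanV.gen[of e E "c * l"] by (simp add: mult.assoc)
next
  case (add f g)
  then show ?case using spanV.add[of "\<lambda>\<sigma>. c * f \<sigma>" E "\<lambda>\<sigma>. c * g \<sigma>"] by (simp add: distrib_left)
qed

lemma V_zero: "1 \<in> E \<Longrightarrow> (\<lambda>\<sigma>. 0) \<in> spanV E"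
  using spanV.gen[of 1 E 0] by simp

lemma V_sum: "1 \<in> E \<Longrightarrow> (\<And>i. i \<in> S \<Longrightarrow> F i \<in> spanV E) \<Longrightarrow> (\<lambda>\<sigma>. \<Sum>i\<in>S. F i \<sigma>) \<in> spanV E"
proof (induction S rule: infinite_finite_induct)
  case (infinite A) then show ?case using V_zero by simp
next
  case empty then show ?case using V_zero by simp
next
  case (insert x F')
  then have "(\<lambda>\<sigma>. F x \<sigma> + (\<Sum>i\<in>F'. F i \<sigma>)) \<in> spanV E" by (intro spanV.add) auto
  then show ?case using insert by simp
qed

lemma V_mulE:
  assumes hom: "\<forall>\<sigma>\<in>H. \<forall>x y. \<sigma> (x * y) = \<sigma> x * \<sigma> y" and E: "\<forall>x\<in>E. \<forall>y\<in>E. x * y \<in> E"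
    and e0: "e0 \<in> E"
  shows "f \<in> spanV E \<Longrightarrow> \<exists>g\<in>spanV E. \<forall>\<sigma>\<in>H. g \<sigma> = \<sigma> e0 * f \<sigma>"
proof (induction rule: spanV.induct)
  case (gen e l)
  have "(\<lambda>\<sigma>. l * \<sigma> (e0 * e)) \<in> spanV E" using E e0 gen by (intro spanV.gen) auto
  moreover have "\<forall>\<sigma>\<in>H. l * \<sigma> (e0 * e) = \<sigma> e0 * (l * \<sigma> e)" using hom by (simp add: algebra_simps)
  ultimately show ?case by (intro bexI[of _ "\<lambda>\<sigma>. l * \<sigma> (e0 * e)"]) auto
next
  case (add f g)
  then obtain g1 g2 where "g1 \<in> spanV E" "\<forall>\<sigma>\<in>H. g1 \<sigma> = \<sigma> e0 * f \<sigma>" "g2 \<in> spanV E" "\<forall>\<sigma>\<in>H. g2 \<sigma> = \<sigma> e0 * g \<sigma>"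
    by blast
  then show ?case by (intro bexI[of _ "\<lambda>\<sigma>. g1 \<sigma> + g2 \<sigma>"]) (auto simp: distrib_left intro: spanV.add)
qed

lemma dedekind_delta:
  assumes H: "finite H" and hom: "\<forall>\<sigma>\<in>H. \<forall>x y. \<sigma> (x * y) = \<sigma> x * \<sigma> y" and one: "\<forall>\<sigma>\<in>H. \<sigma> 1 = 1"
    and E1: "1 \<in> E" and E: "\<forall>x\<in>E. \<forall>y\<in>E. x * y \<in> E"
    and sep: "\<forall>\<sigma>\<in>H. \<forall>\<tau>\<in>H. \<sigma> \<noteq> \<tau> \<longrightarrow> (\<exists>e\<in>E. \<sigma> e \<noteq> \<tau> e)"
    and SH: "S \<subseteq> H"
  shows "\<forall>\<sigma>0\<in>S. \<exists>f\<in>spanV E. \<forall>\<sigma>\<in>S. f \<sigma> = (if \<sigma> = \<sigma>0 then 1 else 0)"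
proof -
  have fS: "finite S" using H SH finite_subset by blast
  show ?thesis using fS SH
  proof (induction S rule: finite_induct)
    case empty then show ?case by simp
  next
    case (insert \<tau> S)
    then have SH': "S \<subseteq> H" and tH: "\<tau> \<in> H" by auto
    from insert.IH[OF SH'] obtain F where F: "\<forall>\<sigma>0\<in>S. F \<sigma>0 \<in> spanV E \<and> (\<forall>\<sigma>\<in>S. F \<sigma>0 \<sigma> = (if \<sigma> = \<sigma>0 then 1 else 0))"
      by metis
    have "\<exists>h\<in>spanV E. (\<forall>\<sigma>\<in>S. h \<sigma> = 0) \<and> h \<tau> = 1"
    proof -
      define w where "w = (\<lambda>\<sigma>. 1 * \<sigma> 1 + (-1) * (\<Sum>\<sigma>0\<in>S. F \<sigma>0 \<sigma>))"
      have wV: "w \<in> spanV E" unfolding w_def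
        by (intro spanV.add spanV.gen V_scale V_sum E1) (use F in auto)
      have wS: "\<forall>\<sigma>\<in>S. w \<sigma> = 0"
      proof
        fix \<sigma> assume s: "\<sigma> \<in> S"
        have "(\<Sum>\<sigma>0\<in>S. F \<sigma>0 \<sigma>) = (\<Sum>\<sigma>0\<in>S. if \<sigma> = \<sigma>0 then 1 else 0)" using F s by (intro sum.cong) auto
        also have "... = 1" using s insert(1) by simp
        finally show "w \<sigma> = 0" unfolding w_def using one s SH' by auto
      qed
      show ?thesis
      proof (cases "w \<tau> = 0")
        case False
        define h where "h = (\<lambda>\<sigma>. (1 / w \<tau>) * w \<sigma>)"
        have hV: "h \<in> spanV E" unfolding h_def by (rule V_scale[OF wV])
        have "\<forall>\<sigma>\<in>S. h \<sigma> = 0" unfolding h_def using wS by simp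
        moreover have "h \<tau> = 1" unfolding h_def using False by simp
        ultimately show ?thesis using hV by blast
      next
        case True
        then have "\<tau> 1 = (\<Sum>\<sigma>0\<in>S. F \<sigma>0 \<tau>)" unfolding w_def by simp
        moreover have "\<tau> 1 = 1" using one tH by blast
        ultimately have "(\<Sum>\<sigma>0\<in>S. F \<sigma>0 \<tau>) = 1" by simp
        then obtain \<sigma>0 where s0: "\<sigma>0 \<in> S" and c0: "F \<sigma>0 \<tau> \<noteq> 0"
          by (metis (mono_tags, lifting) one_neq_zero sum.neutral)
        have "\<tau> \<noteq> \<sigma>0" using s0 insert(2) by auto
        then obtain e where e: "e \<in> E" "\<tau> e \<noteq> \<sigma>0 e" using sep tH s0 SH' by blast
        obtain g1 where g1: "g1 \<in> spanV E" "\<forall>\<sigma>\<in>H. g1 \<sigma> = \<sigma> e * F \<sigma>0 \<sigma>"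
          using V_mulE[OF hom E e(1)] F s0 by blast
        define g where "g = (\<lambda>\<sigma>. g1 \<sigma> + (- \<sigma>0 e) * F \<sigma>0 \<sigma>)"
        have gV: "g \<in> spanV E" unfolding g_def using g1 F s0 by (intro spanV.add V_scale) auto
        have gS: "\<forall>\<sigma>\<in>S. g \<sigma> = 0" using g1 F s0 SH' unfolding g_def by auto
        have gt: "g \<tau> = F \<sigma>0 \<tau> * (\<tau> e - \<sigma>0 e)" using g1 tH unfolding g_def by (simp add: algebra_simps)
        have gt0: "g \<tau> \<noteq> 0" using gt c0 e by simp
        define h where "h = (\<lambda>\<sigma>. (1 / g \<tau>) * g \<sigma>)"
        have hV: "h \<in> spanV E" unfolding h_def by (rule V_scale[OF gV])
        have "\<forall>\<sigma>\<in>S. h \<sigma> = 0" unfolding h_def using gS by simp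
        moreover have "h \<tau> = 1" unfolding h_def using gt0 by simp
        ultimately show ?thesis using hV by blast
      qed
    qed
    then obtain h where h: "h \<in> spanV E" "\<forall>\<sigma>\<in>S. h \<sigma> = 0" "h \<tau> = 1" by blast
    show ?case
    proof
      fix \<sigma>0 assume s0: "\<sigma>0 \<in> insert \<tau> S"
      show "\<exists>f\<in>spanV E. \<forall>\<sigma>\<in>insert \<tau> S. f \<sigma> = (if \<sigma> = \<sigma>0 then 1 else 0)"
      proof (cases "\<sigma>0 = \<tau>")
        case True then show ?thesis using h by (intro bexI[of _ h]) auto
      next
        case False
        then have s0S: "\<sigma>0 \<in> S" using s0 by auto
        define f where "f = (\<lambda>\<sigma>. F \<sigma>0 \<sigma> + (- F \<sigma>0 \<tau>) * h \<sigma>)"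
        have "f \<in> spanV E" unfolding f_def using F s0S h by (intro spanV.add V_scale) auto
        moreover have "\<forall>\<sigma>\<in>insert \<tau> S. f \<sigma> = (if \<sigma> = \<sigma>0 then 1 else 0)"
          using F s0S h False unfolding f_def by auto
        ultimately show ?thesis by blast
      qed
    qed
  qed
qed

locale galois =
  fixes K :: "'a::field set"
  assumes finG: "finite (field_auts_fixing K)"
    and fixK: "{x. \<forall>\<sigma>\<in>field_auts_fixing K. \<sigma> x = x} = K"
    and subK: "is_subfield K"
begin

abbreviation G where "G \<equiv> field_auts_fixing K"

lemma reindex: "\<sigma> \<in> G \<Longrightarrow> (\<Sum>\<tau>\<in>G. g (\<sigma> \<circ> \<tau>)) = (\<Sum>\<tau>\<in>G. g \<tau>)"
proof -
  assume s: "\<sigma> \<in> G"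
  show ?thesis
  proof (rule sum.reindex_bij_witness[of G "\<lambda>\<mu>. inv_into UNIV \<sigma> \<circ> \<mu>" "\<lambda>\<tau>. \<sigma> \<circ> \<tau>"])
    fix a assume "a \<in> G"
    show "inv_into UNIV \<sigma> \<circ> (\<sigma> \<circ> a) = a" using auts_inv_comp[OF s] by (simp add: o_assoc)
    show "\<sigma> \<circ> a \<in> G" using auts_comp[OF s \<open>a \<in> G\<close>] .
    show "\<sigma> \<circ> (inv_into UNIV \<sigma> \<circ> a) = a" using auts_comp_inv[OF s] by (simp add: o_assoc)
    show "inv_into UNIV \<sigma> \<circ> a \<in> G" using auts_comp[OF auts_inv[OF s] \<open>a \<in> G\<close>] .
    show "g (\<sigma> \<circ> a) = g (\<sigma> \<circ> a)" ..
  qed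
qed

definition Tr where "Tr y = (\<Sum>\<tau>\<in>G. \<tau> y)"

lemma Tr_inv: "\<sigma> \<in> G \<Longrightarrow> \<sigma> (Tr y) = Tr y"
proof -
  assume s: "\<sigma> \<in> G"
  have "\<sigma> (Tr y) = (\<Sum>\<tau>\<in>G. (\<sigma> \<circ> \<tau>) y)" unfolding Tr_def aut_sum[OF s] by simp
  also have "... = Tr y" unfolding Tr_def using reindex[OF s, of "\<lambda>\<mu>. \<mu> y"] .
  finally show ?thesis .
qed

lemma Tr_K: "Tr y \<in> K" using Tr_inv fixK by blast

lemma V_trace:
  assumes M: "\<forall>l. \<forall>e\<in>E. Tr (x * l) * e \<in> M" and Madd: "\<forall>a\<in>M. \<forall>b\<in>M. a + b \<in> M"
  shows "f \<in> spanV E \<Longrightarrow> (\<Sum>\<tau>\<in>G. \<tau> x * \<tau> (f (inv_into UNIV \<tau>))) \<in> M"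
proof (induction rule: spanV.induct)
  case (gen e l)
  have "(\<Sum>\<tau>\<in>G. \<tau> x * \<tau> (l * inv_into UNIV \<tau> e)) = (\<Sum>\<tau>\<in>G. \<tau> (x * l) * e)"
  proof (intro sum.cong refl)
    fix \<tau> assume t: "\<tau> \<in> G"
    have "\<tau> (inv_into UNIV \<tau> e) = e" using auts_comp_inv[OF t] by (metis comp_apply id_apply)
    then show "\<tau> x * \<tau> (l * inv_into UNIV \<tau> e) = \<tau> (x * l) * e" by (simp add: aut_mult[OF t] mult.assoc)
  qed
  also have "... = Tr (x * l) * e" unfolding Tr_def by (simp add: sum_distrib_right)
  finally show ?case using M gen by simp
next
  case (add f g)
  have "(\<Sum>\<tau>\<in>G. \<tau> x * \<tau> (f (inv_into UNIV \<tau>) + g (inv_into UNIV \<tau>)))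
     = (\<Sum>\<tau>\<in>G. \<tau> x * \<tau> (f (inv_into UNIV \<tau>))) + (\<Sum>\<tau>\<in>G. \<tau> x * \<tau> (g (inv_into UNIV \<tau>)))"
    by (simp add: aut_add distrib_left sum.distrib)
  then show ?case using add Madd by simp
qed

lemma G_hom: "\<forall>\<sigma>\<in>G. \<forall>x y. \<sigma> (x * y) = \<sigma> x * \<sigma> y" using aut_mult by blast
lemma G_one: "\<forall>\<sigma>\<in>G. \<sigma> 1 = 1" using aut_one by blast

lemma delta_eval:
  assumes f: "\<forall>\<sigma>\<in>G. f \<sigma> = (if \<sigma> = id then 1 else 0)"
  shows "(\<Sum>\<tau>\<in>G. \<tau> x * \<tau> (f (inv_into UNIV \<tau>))) = x"
proof -
  have "(\<Sum>\<tau>\<in>G. \<tau> x * \<tau> (f (inv_into UNIV \<tau>))) = (\<Sum>\<tau>\<in>G. if \<tau> = id then x else 0)"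
  proof (intro sum.cong refl)
    fix \<tau> assume t: "\<tau> \<in> G"
    have iff: "inv_into UNIV \<tau> = id \<longleftrightarrow> \<tau> = id"
      using auts_comp_inv[OF t] auts_inv_comp[OF t] by (metis comp_id id_comp)
    show "\<tau> x * \<tau> (f (inv_into UNIV \<tau>)) = (if \<tau> = id then x else 0)"
      using f auts_inv[OF t] iff aut_zero[OF t] aut_one[OF t] by auto
  qed
  also have "... = x" using auts_id[of K] finG by simp
  finally show ?thesis .
qed

lemma trace_nonzero: "\<exists>l. Tr l \<noteq> 0"
proof (rule ccontr)
  assume "\<not> ?thesis"
  then have T0: "\<forall>l. Tr l = 0" by simp
  have sep: "\<forall>\<sigma>\<in>G. \<forall>\<tau>\<in>G. \<sigma> \<noteq> \<tau> \<longrightarrow> (\<exists>e\<in>UNIV. \<sigma> e \<noteq> \<tau> e)" by auto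
  obtain f where fV: "f \<in> spanV UNIV" and f: "\<forall>\<sigma>\<in>G. f \<sigma> = (if \<sigma> = id then 1 else 0)"
    using dedekind_delta[OF finG G_hom G_one _ _ sep subset_refl] auts_id[of K] by blast
  have "(\<Sum>\<tau>\<in>G. \<tau> 1 * \<tau> (f (inv_into UNIV \<tau>))) \<in> {0}"
    by (rule V_trace[OF _ _ fV]) (use T0 in auto)
  then show False using delta_eval[OF f, of 1] by simp
qed

lemma trace_one: "\<exists>c. Tr c = 1"
proof -
  obtain l where l: "Tr l \<noteq> 0" using trace_nonzero by blast
  have "Tr (l / Tr l) = (\<Sum>\<tau>\<in>G. \<tau> l / Tr l)"
    unfolding Tr_def[of "l / Tr l"] by (intro sum.cong refl) (simp add: aut_divide Tr_inv)
  also have "... = Tr l / Tr l" unfolding Tr_def by (rule sum_divide_distrib[symmetric])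
  finally show ?thesis using l by auto
qed

lemma hilbert90:
  assumes coc: "\<forall>\<sigma>\<in>G. \<forall>\<tau>\<in>G. f (\<sigma> \<circ> \<tau>) = f \<sigma> + \<sigma> (f \<tau>)"
  shows "\<exists>\<theta>. \<forall>\<sigma>\<in>G. \<sigma> \<theta> = \<theta> + f \<sigma>"
proof -
  obtain c where c: "Tr c = 1" using trace_one by blast
  define b where "b = (\<Sum>\<tau>\<in>G. f \<tau> * \<tau> c)"
  have sb: "\<sigma> b = b - f \<sigma>" if s: "\<sigma> \<in> G" for \<sigma>
  proof -
    have "\<sigma> b = (\<Sum>\<tau>\<in>G. \<sigma> (f \<tau>) * (\<sigma> \<circ> \<tau>) c)" unfolding b_def aut_sum[OF s] by (simp add: aut_mult[OF s])
    also have "... = (\<Sum>\<tau>\<in>G. f (\<sigma> \<circ> \<tau>) * (\<sigma> \<circ> \<tau>) c - f \<sigma> * (\<sigma> \<circ> \<tau>) c)"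
      by (intro sum.cong refl) (simp add: coc s algebra_simps)
    also have "... = (\<Sum>\<tau>\<in>G. f (\<sigma> \<circ> \<tau>) * (\<sigma> \<circ> \<tau>) c) - f \<sigma> * (\<Sum>\<tau>\<in>G. (\<sigma> \<circ> \<tau>) c)"
      by (simp add: sum_subtractf sum_distrib_left)
    also have "(\<Sum>\<tau>\<in>G. f (\<sigma> \<circ> \<tau>) * (\<sigma> \<circ> \<tau>) c) = b"
      unfolding b_def using reindex[OF s, of "\<lambda>\<mu>. f \<mu> * \<mu> c"] .
    also have "(\<Sum>\<tau>\<in>G. (\<sigma> \<circ> \<tau>) c) = 1"
      using reindex[OF s, of "\<lambda>\<mu>. \<mu> c"] c unfolding Tr_def by simp
    finally show ?thesis by simp
  qed
  show ?thesis
  proof (intro exI[of _ "- b"] ballI)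
    fix \<sigma> assume s: "\<sigma> \<in> G"
    show "\<sigma> (- b) = - b + f \<sigma>" using aut_uminus[OF s, of b] sb[OF s] by simp
  qed
qed

lemma generation:
  assumes E1: "1 \<in> E" and Eadd: "\<forall>x\<in>E. \<forall>y\<in>E. x + y \<in> E" and Emult: "\<forall>x\<in>E. \<forall>y\<in>E. x * y \<in> E"
    and KE: "K \<subseteq> E"
    and sep: "\<forall>\<sigma>\<in>G. \<forall>\<tau>\<in>G. \<sigma> \<noteq> \<tau> \<longrightarrow> (\<exists>e\<in>E. \<sigma> e \<noteq> \<tau> e)"
  shows "E = UNIV"
proof -
  obtain f where fV: "f \<in> spanV E" and f: "\<forall>\<sigma>\<in>G. f \<sigma> = (if \<sigma> = id then 1 else 0)"
    using dedekind_delta[OF finG G_hom G_one E1 Emult sep subset_refl] auts_id[of K] by blast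
  have "x \<in> E" for x
  proof -
    have "(\<Sum>\<tau>\<in>G. \<tau> x * \<tau> (f (inv_into UNIV \<tau>))) \<in> E"
      by (rule V_trace[OF _ Eadd fV]) (use Tr_K KE Emult in blast)
    then show ?thesis using delta_eval[OF f] by simp
  qed
  then show ?thesis by auto
qed

end

definition Mt :: "nat \<Rightarrow> (nat \<Rightarrow> nat \<Rightarrow> 'a) \<Rightarrow> 'a::field mat" where
  "Mt n X = mat n n (\<lambda>(i,j). X i j)"

lemma Mt_carrier[simp]: "Mt n X \<in> carrier_mat n n" unfolding Mt_def by simp
lemma Mt_dims[simp]: "dim_row (Mt n X) = n" "dim_col (Mt n X) = n" unfolding Mt_def by simp_all
lemma Mt_index[simp]: "i < n \<Longrightarrow> j < n \<Longrightarrow> Mt n X $$ (i,j) = X i j" unfolding Mt_def by simp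

lemma mult_index:
  assumes "A \<in> carrier_mat n n" "B \<in> carrier_mat n n" "i < n" "j < n"
  shows "(A * B) $$ (i,j) = (\<Sum>k<n. A $$ (i,k) * B $$ (k,j))"
  using assms by (auto simp: scalar_prod_def atLeast0LessThan intro: sum.cong)

lemma Mt_mult: "Mt n X * Mt n Y = Mt n (\<lambda>i j. \<Sum>k<n. X i k * Y k j)"
proof (rule eq_matI)
  fix i j assume "i < dim_row (Mt n (\<lambda>i j. \<Sum>k<n. X i k * Y k j))" "j < dim_col (Mt n (\<lambda>i j. \<Sum>k<n. X i k * Y k j))"
  then have ij: "i < n" "j < n" by simp_all
  show "(Mt n X * Mt n Y) $$ (i, j) = Mt n (\<lambda>i j. \<Sum>k<n. X i k * Y k j) $$ (i, j)"
    by (subst mult_index[OF Mt_carrier Mt_carrier ij]) (use ij in auto)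
qed auto

definition unitri :: "nat \<Rightarrow> (nat \<Rightarrow> nat \<Rightarrow> 'a::field) \<Rightarrow> bool" where
  "unitri n X \<longleftrightarrow> (\<forall>i<n. \<forall>j<n. (i = j \<longrightarrow> X i j = 1) \<and> (j < i \<longrightarrow> X i j = 0))"

lemma unitri_inv:
  assumes u: "unitri n X"
  shows "\<exists>Y\<in>carrier_mat n n. Y * Mt n X = 1\<^sub>m n \<and> Mt n X * Y = 1\<^sub>m n"
proof -
  have ut: "upper_triangular (Mt n X)" using u unfolding unitri_def by (intro upper_triangularI) auto
  have "diag_mat (Mt n X) = replicate n 1" using u unfolding unitri_def diag_mat_def
    by (intro nth_equalityI) auto
  then have "det (Mt n X) = 1" using det_upper_triangular[OF ut Mt_carrier] by simp
  then have "Mt n X \<in> Units (ring_mat TYPE('a) n ())" by (intro det_non_zero_imp_unit) auto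
  then show ?thesis unfolding Units_def ring_mat_def by auto
qed

lemma hom_sum:
  assumes "\<forall>a b. f (a + b) = f a + f b" "f 0 = 0"
  shows "f (\<Sum>i\<in>S. g i) = (\<Sum>i\<in>S. f (g i))"
  by (induction S rule: infinite_finite_induct) (auto simp: assms)

lemma map_mat_mult:
  assumes add: "\<forall>a b. f (a + b) = f a + f b" and mul: "\<forall>a b. f (a * b) = f a * f b" and z: "f 0 = 0"
    and A: "A \<in> carrier_mat n n" and B: "B \<in> carrier_mat n n"
  shows "map_mat f (A * B) = map_mat f A * map_mat f B"
proof (rule eq_matI)
  fix i j assume "i < dim_row (map_mat f A * map_mat f B)" "j < dim_col (map_mat f A * map_mat f B)"
  then have ij: "i < n" "j < n" using A B by auto
  have e1: "map_mat f (A * B) $$ (i,j) = f ((A * B) $$ (i,j))" using A B ij by simp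
  have e2: "(A * B) $$ (i,j) = (\<Sum>k<n. A $$ (i,k) * B $$ (k,j))" by (rule mult_index[OF A B ij])
  have e3: "(map_mat f A * map_mat f B) $$ (i,j) = (\<Sum>k<n. map_mat f A $$ (i,k) * map_mat f B $$ (k,j))"
    by (rule mult_index) (use A B ij in auto)
  have e4: "f (\<Sum>k<n. A $$ (i,k) * B $$ (k,j)) = (\<Sum>k<n. f (A $$ (i,k)) * f (B $$ (k,j)))"
    using hom_sum[OF add z, of "\<lambda>k. A $$ (i,k) * B $$ (k,j)" "{..<n}"] mul by simp
  have e5: "(\<Sum>k<n. map_mat f A $$ (i,k) * map_mat f B $$ (k,j)) = (\<Sum>k<n. f (A $$ (i,k)) * f (B $$ (k,j)))"
    using A B ij by (intro sum.cong) auto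
  show "map_mat f (A * B) $$ (i,j) = (map_mat f A * map_mat f B) $$ (i,j)"
    using e1 e2 e3 e4 e5 by simp
qed (use A B in auto)

lemma map_mat_one: "f 0 = 0 \<Longrightarrow> f 1 = 1 \<Longrightarrow> map_mat f (1\<^sub>m n) = 1\<^sub>m n"
  by (rule eq_matI) auto

locale main = vfield K k v t p + galois K for K :: "'a::field set" and k v t p +
  fixes n :: nat and \<phi> :: "('a \<Rightarrow> 'a) \<Rightarrow> (nat \<Rightarrow> nat \<Rightarrow> nat)"
  assumes n2: "n \<ge> 2" and phom: "\<phi> \<in> hom (Gal K) (UT_Fp n p)"
    and pbij: "bij_betw \<phi> (field_auts_fixing K) (carrier (UT_Fp n p))"
begin

definition rho :: "('a \<Rightarrow> 'a) \<Rightarrow> nat \<Rightarrow> nat \<Rightarrow> 'a" where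
  "rho \<sigma> i j = of_nat (\<phi> (inv_into UNIV \<sigma>) i j)"

lemma phi_car: "\<sigma> \<in> G \<Longrightarrow> (\<forall>i j. \<phi> \<sigma> i j < p) \<and> (\<forall>i j. \<not> (i < n \<and> j < n) \<longrightarrow> \<phi> \<sigma> i j = 0)
        \<and> (\<forall>i<n. \<phi> \<sigma> i i = 1) \<and> (\<forall>i j. j < i \<longrightarrow> \<phi> \<sigma> i j = 0)"
  using bij_betw_apply[OF pbij] unfolding UT_Fp_def by auto

lemma rho_diag: "\<sigma> \<in> G \<Longrightarrow> i < n \<Longrightarrow> rho \<sigma> i i = 1"
  using phi_car[OF auts_inv] unfolding rho_def by simp
lemma rho_below: "\<sigma> \<in> G \<Longrightarrow> j < i \<Longrightarrow> rho \<sigma> i j = 0"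
  using phi_car[OF auts_inv] unfolding rho_def by simp
lemma rho_frob: "(rho \<sigma> i j) ^ p = rho \<sigma> i j"
  unfolding rho_def by (rule frob_of_nat[OF prime_p char_p])
lemma rho_fix: "\<tau> \<in> G \<Longrightarrow> \<tau> (rho \<sigma> i j) = rho \<sigma> i j"
  unfolding rho_def by (rule aut_of_nat)

lemma UT_mult: "A \<otimes>\<^bsub>UT_Fp n p\<^esub> B = (\<lambda>i j. if i < n \<and> j < n then (\<Sum>k<n. A i k * B k j) mod p else 0)"
  unfolding UT_Fp_def by simp

lemma rho_comp:
  assumes s: "\<sigma> \<in> G" and t: "\<tau> \<in> G" and ij: "i < n" "j < n"
  shows "rho (\<sigma> \<circ> \<tau>) i j = (\<Sum>m<n. rho \<tau> i m * rho \<sigma> m j)"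
proof -
  have "inv_into UNIV (\<sigma> \<circ> \<tau>) = inv_into UNIV \<tau> \<circ> inv_into UNIV \<sigma>"
    using o_inv_distrib[OF aut_bij[OF s] aut_bij[OF t]] .
  also have "... = inv_into UNIV \<tau> \<otimes>\<^bsub>Gal K\<^esub> inv_into UNIV \<sigma>" unfolding Gal_def by simp
  finally have "\<phi> (inv_into UNIV (\<sigma> \<circ> \<tau>)) = \<phi> (inv_into UNIV \<tau>) \<otimes>\<^bsub>UT_Fp n p\<^esub> \<phi> (inv_into UNIV \<sigma>)"
    using hom_mult[OF phom] auts_inv[OF s] auts_inv[OF t] unfolding Gal_def by simp
  then have "\<phi> (inv_into UNIV (\<sigma> \<circ> \<tau>)) i j = (\<Sum>m<n. \<phi> (inv_into UNIV \<tau>) i m * \<phi> (inv_into UNIV \<sigma>) m j) mod p"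
    using ij unfolding UT_mult by simp
  then show ?thesis unfolding rho_def using of_nat_mod_CHAR[OF char_p] by simp
qed

lemma G_fin: "finite G" by (rule finG)

lemma rho_inj:
  assumes s: "\<sigma> \<in> G" and r: "\<forall>i<n. \<forall>j<n. rho \<sigma> i j = (if i = j then 1 else 0)"
  shows "\<sigma> = id"
proof -
  define one where "one = (\<lambda>i j. if i < n \<and> i = j then 1 else (0::nat))"
  have oneC: "one \<in> carrier (UT_Fp n p)" unfolding one_def UT_Fp_def using p2 by auto
  have is': "inv_into UNIV \<sigma> \<in> G" using auts_inv[OF s] .
  have e1: "\<phi> (inv_into UNIV \<sigma>) = one"
  proof (intro ext)
    fix i j
    show "\<phi> (inv_into UNIV \<sigma>) i j = one i j"
    proof (cases "i < n \<and> j < n")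
      case True
      have "(of_nat (\<phi> (inv_into UNIV \<sigma>) i j) :: 'a) = of_nat (one i j)"
        using r True unfolding rho_def one_def by auto
      moreover have "one i j < p" unfolding one_def using p2 by auto
      ultimately show ?thesis using of_nat_inj_CHAR[OF char_p] phi_car[OF is'] by blast
    next
      case False then show ?thesis using phi_car[OF is'] unfolding one_def by auto
    qed
  qed
  obtain \<tau> where t: "\<tau> \<in> G" "\<phi> \<tau> = one" using oneC pbij by (metis bij_betw_imp_surj_on imageE)
  have "one \<otimes>\<^bsub>UT_Fp n p\<^esub> one = one"
  proof -
    have "(\<Sum>k<n. one i k * one k j) = one i j" if "i < n" "j < n" for i j
      using that unfolding one_def by (simp add: sum.delta' if_distrib[of "\<lambda>x. x * _"] cong: if_cong)
    then show ?thesis unfolding UT_mult using p2 by (auto simp: one_def intro!: ext)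
  qed
  then have "\<phi> (\<tau> \<circ> \<tau>) = \<phi> \<tau>" using hom_mult[OF phom, of \<tau> \<tau>] t unfolding Gal_def by simp
  then have "\<tau> \<circ> \<tau> = \<tau>" using pbij auts_comp[OF t(1) t(1)] t(1) unfolding bij_betw_def inj_on_def by blast
  then have "\<tau> = id" using aut_inj[OF t(1)] by (metis comp_apply eq_id_iff)
  then have "\<phi> (inv_into UNIV \<sigma>) = \<phi> id" using e1 t by simp
  then have "inv_into UNIV \<sigma> = id" using pbij is' auts_id[of K] unfolding bij_betw_def inj_on_def by blast
  then show "\<sigma> = id" using auts_comp_inv[OF s] by simp
qed

end

lemma sum_swap_mult:
  fixes a :: "'b \<Rightarrow> 'a::comm_ring_1"
  shows "(\<Sum>k\<in>S. (\<Sum>m\<in>T. a m * b m k) * h k) = (\<Sum>m\<in>T. a m * (\<Sum>k\<in>S. b m k * h k))"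
  by (simp add: sum_distrib_left sum_distrib_right mult.assoc) (rule sum.swap)

context main begin

definition red :: "'a \<Rightarrow> bool" where
  "red a \<longleftrightarrow> (\<forall>l. (int p dvd l \<or> 0 \<le> l) \<longrightarrow> coef v k t a l = 0)"

definition Good :: "nat \<Rightarrow> (nat \<Rightarrow> nat \<Rightarrow> 'a) \<Rightarrow> (nat \<Rightarrow> nat \<Rightarrow> 'a) \<Rightarrow> bool" where
  "Good d Th Am \<longleftrightarrow> unitri n Th \<and> unitri n Am \<and>
     (\<forall>i<n. \<forall>j<n. j - i \<le> d \<longrightarrow> Am i j \<in> K \<and> (i < j \<longrightarrow> red (Am i j)) \<and>
        (\<forall>\<sigma>\<in>G. \<sigma> (Th i j) = (\<Sum>k<n. rho \<sigma> i k * Th k j)) \<and>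
        (\<Sum>k<n. Th i k ^ p * Am k j) = Th i j)"

definition Th0 :: "(nat \<Rightarrow> nat \<Rightarrow> 'a) \<Rightarrow> nat \<Rightarrow> nat \<Rightarrow> nat \<Rightarrow> 'a" where
  "Th0 Th i j m = (if m = i then 0 else Th m j)"
definition Ff :: "(nat \<Rightarrow> nat \<Rightarrow> 'a) \<Rightarrow> nat \<Rightarrow> nat \<Rightarrow> ('a \<Rightarrow> 'a) \<Rightarrow> 'a" where
  "Ff Th i j \<sigma> = (\<Sum>m<n. rho \<sigma> i m * Th0 Th i j m)"
definition RR :: "(nat \<Rightarrow> nat \<Rightarrow> 'a) \<Rightarrow> (nat \<Rightarrow> nat \<Rightarrow> 'a) \<Rightarrow> nat \<Rightarrow> nat \<Rightarrow> 'a" where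
  "RR Th Am i j = (\<Sum>m<n. if m = i \<or> m = j then 0 else Th i m ^ p * Am m j)"

lemma p0: "p > 0" using p2 by simp

lemma entry:
  assumes g: "Good d Th Am" and ij: "i < j" "j < n" "j - i = Suc d"
  shows "\<exists>\<theta>. (\<forall>\<sigma>\<in>G. \<sigma> \<theta> = \<theta> + Ff Th i j \<sigma>) \<and> \<theta> - \<theta> ^ p - RR Th Am i j \<in> K
           \<and> red (\<theta> - \<theta> ^ p - RR Th Am i j)"
proof -
  have i_n: "i < n" using ij by simp
  have uT1: "\<And>a. a < n \<Longrightarrow> Th a a = 1" and uT0: "\<And>a b. a < n \<Longrightarrow> b < n \<Longrightarrow> b < a \<Longrightarrow> Th a b = 0"
    and uA1: "\<And>a. a < n \<Longrightarrow> Am a a = 1" and uA0: "\<And>a b. a < n \<Longrightarrow> b < n \<Longrightarrow> b < a \<Longrightarrow> Am a b = 0"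
    using g unfolding Good_def unitri_def by auto
  have GK: "\<And>a b. a < n \<Longrightarrow> b < n \<Longrightarrow> b - a \<le> d \<Longrightarrow> Am a b \<in> K"
    and Gc: "\<And>a b \<sigma>. a < n \<Longrightarrow> b < n \<Longrightarrow> b - a \<le> d \<Longrightarrow> \<sigma> \<in> G \<Longrightarrow> \<sigma> (Th a b) = (\<Sum>k<n. rho \<sigma> a k * Th k b)"
    and Gf: "\<And>a b. a < n \<Longrightarrow> b < n \<Longrightarrow> b - a \<le> d \<Longrightarrow> (\<Sum>k<n. Th a k ^ p * Am k b) = Th a b"
    using g unfolding Good_def by auto
  have small: "\<And>m. i < m \<Longrightarrow> j - m \<le> d" using ij by auto
  define h where "h = Th0 Th i j"
  have hi: "h i = 0" unfolding h_def Th0_def by simp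
  have hm: "\<And>m. m \<noteq> i \<Longrightarrow> h m = Th m j" unfolding h_def Th0_def by simp
  have coc: "\<forall>\<sigma>\<in>G. \<forall>\<tau>\<in>G. Ff Th i j (\<sigma> \<circ> \<tau>) = Ff Th i j \<sigma> + \<sigma> (Ff Th i j \<tau>)"
  proof (intro ballI)
    fix \<sigma> \<tau> assume s: "\<sigma> \<in> G" and t: "\<tau> \<in> G"
    have "Ff Th i j (\<sigma> \<circ> \<tau>) = (\<Sum>k<n. (\<Sum>m<n. rho \<tau> i m * rho \<sigma> m k) * h k)"
      unfolding Ff_def h_def using rho_comp[OF s t i_n] by (intro sum.cong) auto
    also have "... = (\<Sum>m<n. rho \<tau> i m * (\<Sum>k<n. rho \<sigma> m k * h k))" by (rule sum_swap_mult)
    also have "... = (\<Sum>m<n. (if m = i then Ff Th i j \<sigma> else 0) + rho \<tau> i m * \<sigma> (h m))"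
    proof (intro sum.cong refl)
      fix m assume m: "m \<in> {..<n}"
      consider "m = i" | "m < i" | "i < m" by linarith
      then show "rho \<tau> i m * (\<Sum>k<n. rho \<sigma> m k * h k) = (if m = i then Ff Th i j \<sigma> else 0) + rho \<tau> i m * \<sigma> (h m)"
      proof cases
        case 1 then show ?thesis using rho_diag[OF t i_n] aut_zero[OF s] hi unfolding Ff_def h_def by simp
      next
        case 2 then show ?thesis using rho_below[OF t] by simp
      next
        case 3
        have "(\<Sum>k<n. rho \<sigma> m k * h k) = (\<Sum>k<n. rho \<sigma> m k * Th k j)"
        proof (intro sum.cong refl)
          fix x assume "x \<in> {..<n}"
          show "rho \<sigma> m x * h x = rho \<sigma> m x * Th x j"
          proof (cases "x = i")
            case True then show ?thesis using rho_below[OF s 3] by simp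
          next
            case False then show ?thesis using hm by simp
          qed
        qed
        also have "... = \<sigma> (Th m j)" using Gc[of m j \<sigma>] m ij small[OF 3] s by simp
        finally show ?thesis using 3 hm by simp
      qed
    qed
    also have "... = Ff Th i j \<sigma> + (\<Sum>m<n. rho \<tau> i m * \<sigma> (h m))" using i_n by (simp add: sum.distrib)
    also have "(\<Sum>m<n. rho \<tau> i m * \<sigma> (h m)) = \<sigma> (Ff Th i j \<tau>)"
      unfolding Ff_def aut_sum[OF s] h_def by (simp add: aut_mult[OF s] rho_fix[OF s])
    finally show "Ff Th i j (\<sigma> \<circ> \<tau>) = Ff Th i j \<sigma> + \<sigma> (Ff Th i j \<tau>)" .
  qed
  obtain \<theta>0 where th0: "\<forall>\<sigma>\<in>G. \<sigma> \<theta>0 = \<theta>0 + Ff Th i j \<sigma>" using hilbert90[OF coc] by blast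
  define R where "R = RR Th Am i j"
  define a0 where "a0 = \<theta>0 - \<theta>0 ^ p - R"
  have R': "R = (\<Sum>k<n. if i < k \<and> k < j then Th i k ^ p * Am k j else 0)"
    unfolding R_def RR_def
  proof (intro sum.cong refl)
    fix k assume k: "k \<in> {..<n}"
    show "(if k = i \<or> k = j then 0 else Th i k ^ p * Am k j) = (if i < k \<and> k < j then Th i k ^ p * Am k j else 0)"
      using uT0[OF i_n, of k] uA0[of k j] k ij p0 by auto
  qed
  have Em: "Th m j - Th m j ^ p = (\<Sum>k<n. if i < k \<and> k < j then Th m k ^ p * Am k j else 0)"
    if m: "m < n" "i < m" for m
  proof -
    have "Th m j = (\<Sum>k<n. Th m k ^ p * Am k j)" using Gf[of m j] m ij small[OF m(2)] by simp
    also have "... = (\<Sum>k<n. (if k = j then Th m j ^ p else 0) + (if i < k \<and> k < j then Th m k ^ p * Am k j else 0))"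
    proof (intro sum.cong refl)
      fix k assume k: "k \<in> {..<n}"
      consider "k = j" | "k \<noteq> j" "i < k \<and> k < j" | "k \<le> i" | "j < k" by linarith
      then show "Th m k ^ p * Am k j = (if k = j then Th m j ^ p else 0) + (if i < k \<and> k < j then Th m k ^ p * Am k j else 0)"
      proof cases
        case 1 then show ?thesis using uA1 ij by simp
      next
        case 2 then show ?thesis by simp
      next
        case 3 then show ?thesis using uT0[OF m(1), of k] k m p0 ij by auto
      next
        case 4 then show ?thesis using uA0[of k j] k ij by auto
      qed
    qed
    also have "... = Th m j ^ p + (\<Sum>k<n. if i < k \<and> k < j then Th m k ^ p * Am k j else 0)"
      using ij by (simp add: sum.distrib)
    finally show ?thesis by (simp add: algebra_simps)
  qed
  have inv: "\<sigma> a0 = a0" if s: "\<sigma> \<in> G" for \<sigma>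
  proof -
    have fp: "(Ff Th i j \<sigma>) ^ p = (\<Sum>m<n. rho \<sigma> i m * h m ^ p)"
      unfolding Ff_def frob_sum[OF prime_p char_p] h_def by (simp add: power_mult_distrib rho_frob)
    have S1: "Ff Th i j \<sigma> - (Ff Th i j \<sigma>) ^ p = (\<Sum>m<n. rho \<sigma> i m * (h m - h m ^ p))"
      unfolding fp unfolding Ff_def h_def by (simp add: sum_subtractf right_diff_distrib)
    have sR: "\<sigma> R = (\<Sum>k<n. if i < k \<and> k < j then (\<Sum>m<n. rho \<sigma> i m * Th m k ^ p) * Am k j else 0)"
      unfolding R' aut_sum[OF s]
    proof (intro sum.cong refl)
      fix k assume k: "k \<in> {..<n}"
      show "\<sigma> (if i < k \<and> k < j then Th i k ^ p * Am k j else 0) =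
            (if i < k \<and> k < j then (\<Sum>m<n. rho \<sigma> i m * Th m k ^ p) * Am k j else 0)"
      proof (cases "i < k \<and> k < j")
        case True
        have "\<sigma> (Th i k) = (\<Sum>m<n. rho \<sigma> i m * Th m k)" using Gc[of i k \<sigma>] i_n k True ij s by auto
        then have "\<sigma> (Th i k) ^ p = (\<Sum>m<n. rho \<sigma> i m * Th m k ^ p)"
          by (simp add: frob_sum[OF prime_p char_p] power_mult_distrib rho_frob)
        moreover have "\<sigma> (Am k j) = Am k j" using aut_K[OF s] GK[of k j] k ij True by auto
        ultimately show ?thesis using True by (simp add: aut_mult[OF s] aut_power[OF s])
      next
        case False then show ?thesis by (simp only: if_not_P[OF False] if_False aut_zero[OF s])
      qed
    qed
    have dR: "\<sigma> R - R = (\<Sum>k<n. if i < k \<and> k < j then (\<Sum>m<n. if m = i then 0 else rho \<sigma> i m * Th m k ^ p) * Am k j else 0)"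
      unfolding sR unfolding R' sum_subtractf[symmetric]
    proof (intro sum.cong refl)
      fix k assume k: "k \<in> {..<n}"
      have "(\<Sum>m<n. rho \<sigma> i m * Th m k ^ p) = (\<Sum>m<n. (if m = i then Th i k ^ p else 0) + (if m = i then 0 else rho \<sigma> i m * Th m k ^ p))"
        using rho_diag[OF s i_n] by (intro sum.cong) auto
      also have "... = Th i k ^ p + (\<Sum>m<n. if m = i then 0 else rho \<sigma> i m * Th m k ^ p)"
        using i_n by (simp add: sum.distrib)
      finally show "(if i < k \<and> k < j then (\<Sum>m<n. rho \<sigma> i m * Th m k ^ p) * Am k j else 0) -
          (if i < k \<and> k < j then Th i k ^ p * Am k j else 0) =
          (if i < k \<and> k < j then (\<Sum>m<n. if m = i then 0 else rho \<sigma> i m * Th m k ^ p) * Am k j else 0)"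
        by (simp add: algebra_simps)
    qed
    have star: "rho \<sigma> i m * (h m - h m ^ p) =
        (\<Sum>k<n. (if m = i then 0 else rho \<sigma> i m) * ((if i < k \<and> k < j then Th m k ^ p * Am k j else 0)))"
      if m: "m < n" for m
    proof -
      consider "m = i" | "m < i" | "i < m" by linarith
      then show ?thesis
      proof cases
        case 1 then show ?thesis using hi p0 by simp
      next
        case 2 then show ?thesis using rho_below[OF s] by simp
      next
        case 3
        then show ?thesis using Em[OF m 3] hm[of m] by (simp add: sum_distrib_left[symmetric])
      qed
    qed
    have S1': "(\<Sum>m<n. rho \<sigma> i m * (h m - h m ^ p)) = \<sigma> R - R"
    proof -
      have "(\<Sum>m<n. rho \<sigma> i m * (h m - h m ^ p)) =
          (\<Sum>m<n. (if m = i then 0 else rho \<sigma> i m) * (\<Sum>k<n. (if i < k \<and> k < j then Th m k ^ p * Am k j else 0)))"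
        using star by (intro sum.cong refl) (simp add: sum_distrib_left)
      also have "... = (\<Sum>k<n. (\<Sum>m<n. (if m = i then 0 else rho \<sigma> i m) * (if i < k \<and> k < j then Th m k ^ p * Am k j else 0)))"
        by (simp add: sum_distrib_left) (rule sum.swap)
      also have "... = \<sigma> R - R" unfolding dR
      proof (intro sum.cong refl)
        fix k assume k: "k \<in> {..<n}"
        show "(\<Sum>m<n. (if m = i then 0 else rho \<sigma> i m) * (if i < k \<and> k < j then Th m k ^ p * Am k j else 0)) =
          (if i < k \<and> k < j then (\<Sum>m<n. if m = i then 0 else rho \<sigma> i m * Th m k ^ p) * Am k j else 0)"
          by (cases "i < k \<and> k < j") (auto simp: sum_distrib_right intro!: sum.cong)
      qed
      finally show ?thesis .
    qed
    have "\<sigma> a0 = \<sigma> \<theta>0 - (\<sigma> \<theta>0) ^ p - \<sigma> R" unfolding a0_def by (simp add: aut_diff[OF s] aut_power[OF s])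
    also have "\<sigma> \<theta>0 - (\<sigma> \<theta>0) ^ p = \<theta>0 - \<theta>0 ^ p + (Ff Th i j \<sigma> - (Ff Th i j \<sigma>) ^ p)"
      using th0 s frob_add[OF prime_p char_p, of \<theta>0 "Ff Th i j \<sigma>"] by (simp add: algebra_simps)
    finally show "\<sigma> a0 = a0" unfolding S1 S1' a0_def by (simp add: algebra_simps)
  qed
  have a0K: "a0 \<in> K" using inv fixK by blast
  obtain b where b: "b \<in> K" "\<forall>l. (int p dvd l \<or> 0 \<le> l) \<longrightarrow> coef v k t (a0 + b - b ^ p) l = 0"
    using reduce[OF a0K] by blast
  define \<theta> where "\<theta> = \<theta>0 + b"
  have "\<forall>\<sigma>\<in>G. \<sigma> \<theta> = \<theta> + Ff Th i j \<sigma>"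
  proof
    fix \<sigma> assume s: "\<sigma> \<in> G"
    show "\<sigma> \<theta> = \<theta> + Ff Th i j \<sigma>" unfolding \<theta>_def using th0 aut_K[OF s b(1)] s by (simp add: aut_add[OF s])
  qed
  moreover have e: "\<theta> - \<theta> ^ p - RR Th Am i j = a0 + b - b ^ p"
    unfolding \<theta>_def a0_def R_def using frob_add[OF prime_p char_p, of \<theta>0 b] by (simp add: algebra_simps)
  moreover have "a0 + b - b ^ p \<in> K" using a0K b(1) by (intro Kdiff Kadd Kpower)
  moreover have "red (a0 + b - b ^ p)" using b(2) unfolding red_def by blast
  ultimately show ?thesis by (intro exI[of _ \<theta>]) simp
qed

end

context main begin

lemma good0: "Good 0 (\<lambda>i j. if i = j then 1 else 0) (\<lambda>i j. if i = j then 1 else 0)"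
  unfolding Good_def unitri_def
proof (intro conjI allI impI ballI)
  fix i j \<sigma> assume i: "i < n" and j: "j < n" and ji: "j - i \<le> 0"
  then have ji': "j \<le> i" by simp
  show "(if i = j then 1 else 0) \<in> K" using K0 K1 by simp
  show "i < j \<Longrightarrow> red (if i = j then 1 else 0)" using ji' by simp
  assume s: "\<sigma> \<in> G"
  have "(\<Sum>k<n. rho \<sigma> i k * (if k = j then 1 else 0)) = rho \<sigma> i j"
    using j by (simp add: if_distrib[of "\<lambda>x. _ * x"] cong: if_cong)
  also have "... = (if i = j then 1 else 0)" using ji' rho_diag[OF s i] rho_below[OF s, of j i] by auto
  finally show "\<sigma> (if i = j then 1 else 0) = (\<Sum>k<n. rho \<sigma> i k * (if k = j then 1 else 0))"
    using aut_zero[OF s] aut_one[OF s] by simp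
next
  fix i j assume i: "i < n" and j: "j < n" and ji: "j - i \<le> 0"
  have "(\<Sum>k<n. (if i = k then 1 else 0) ^ p * (if k = j then 1 else (0::'a))) = (\<Sum>k<n. if k = i then (if i = j then 1 else 0) else 0)"
    using p0 by (intro sum.cong) auto
  also have "... = (if i = j then 1 else 0)" using i by simp
  finally show "(\<Sum>k<n. (if i = k then 1 else 0) ^ p * (if k = j then 1 else (0::'a))) = (if i = j then 1 else 0)" .
qed auto

lemma step:
  assumes g: "Good d Th Am"
  shows "\<exists>Th' Am'. Good (Suc d) Th' Am'"
proof -
  have uT1: "\<And>a. a < n \<Longrightarrow> Th a a = 1" and uT0: "\<And>a b. a < n \<Longrightarrow> b < n \<Longrightarrow> b < a \<Longrightarrow> Th a b = 0"
    and uA1: "\<And>a. a < n \<Longrightarrow> Am a a = 1" and uA0: "\<And>a b. a < n \<Longrightarrow> b < n \<Longrightarrow> b < a \<Longrightarrow> Am a b = 0"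
    using g unfolding Good_def unitri_def by auto
  have GK: "\<And>a b. a < n \<Longrightarrow> b < n \<Longrightarrow> b - a \<le> d \<Longrightarrow> Am a b \<in> K"
    and Gr: "\<And>a b. a < n \<Longrightarrow> b < n \<Longrightarrow> b - a \<le> d \<Longrightarrow> a < b \<Longrightarrow> red (Am a b)"
    and Gc: "\<And>a b \<sigma>. a < n \<Longrightarrow> b < n \<Longrightarrow> b - a \<le> d \<Longrightarrow> \<sigma> \<in> G \<Longrightarrow> \<sigma> (Th a b) = (\<Sum>k<n. rho \<sigma> a k * Th k b)"
    and Gf: "\<And>a b. a < n \<Longrightarrow> b < n \<Longrightarrow> b - a \<le> d \<Longrightarrow> (\<Sum>k<n. Th a k ^ p * Am k b) = Th a b"
    using g unfolding Good_def by auto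
  define P where "P i j \<longleftrightarrow> i < j \<and> j < n \<and> j - i = Suc d" for i j
  define T where "T i j = (SOME \<theta>. (\<forall>\<sigma>\<in>G. \<sigma> \<theta> = \<theta> + Ff Th i j \<sigma>) \<and> \<theta> - \<theta> ^ p - RR Th Am i j \<in> K
           \<and> red (\<theta> - \<theta> ^ p - RR Th Am i j))" for i j
  have TP: "(\<forall>\<sigma>\<in>G. \<sigma> (T i j) = T i j + Ff Th i j \<sigma>) \<and> T i j - T i j ^ p - RR Th Am i j \<in> K
           \<and> red (T i j - T i j ^ p - RR Th Am i j)" if "P i j" for i j
    unfolding T_def by (rule someI_ex[OF entry[OF g]]) (use that in \<open>auto simp: P_def\<close>)
  define Th' where "Th' i j = (if P i j then T i j else Th i j)" for i j
  define Am' where "Am' i j = (if P i j then T i j - T i j ^ p - RR Th Am i j else Am i j)" for i j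
  have nP: "\<not> P i j" if "j \<le> i" for i j using that unfolding P_def by auto
  have main: "Am' i j \<in> K \<and> (i < j \<longrightarrow> red (Am' i j)) \<and> (\<forall>\<sigma>\<in>G. \<sigma> (Th' i j) = (\<Sum>k<n. rho \<sigma> i k * Th' k j))
      \<and> (\<Sum>k<n. Th' i k ^ p * Am' k j) = Th' i j"
    if ij: "i < n" "j < n" "j - i \<le> Suc d" for i j
  proof (cases "P i j")
    case False
    then have jd: "j - i \<le> d" using ij unfolding P_def by auto
    have e1: "Th' i j = Th i j" "Am' i j = Am i j" using False unfolding Th'_def Am'_def by auto
    have coc: "\<forall>\<sigma>\<in>G. \<sigma> (Th' i j) = (\<Sum>k<n. rho \<sigma> i k * Th' k j)"
    proof
      fix \<sigma> assume s: "\<sigma> \<in> G"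
      have "(\<Sum>k<n. rho \<sigma> i k * Th' k j) = (\<Sum>k<n. rho \<sigma> i k * Th k j)"
      proof (intro sum.cong refl)
        fix k assume k: "k \<in> {..<n}"
        show "rho \<sigma> i k * Th' k j = rho \<sigma> i k * Th k j"
        proof (cases "k < i")
          case True then show ?thesis using rho_below[OF s True] by simp
        next
          case False then have "\<not> P k j" using jd unfolding P_def by auto
          then show ?thesis unfolding Th'_def by simp
        qed
      qed
      then show "\<sigma> (Th' i j) = (\<Sum>k<n. rho \<sigma> i k * Th' k j)" using e1 Gc[OF ij(1,2) jd s] by simp
    qed
    have fr: "(\<Sum>k<n. Th' i k ^ p * Am' k j) = Th' i j"
    proof -
      have "(\<Sum>k<n. Th' i k ^ p * Am' k j) = (\<Sum>k<n. Th i k ^ p * Am k j)"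
      proof (intro sum.cong refl)
        fix k assume k: "k \<in> {..<n}"
        show "Th' i k ^ p * Am' k j = Th i k ^ p * Am k j"
        proof (cases "P i k")
          case True
          then have "j < k" using jd unfolding P_def by auto
          then have "Am k j = 0" "\<not> P k j" using uA0[of k j] k ij unfolding P_def by auto
          then show ?thesis unfolding Am'_def by simp
        next
          case nik: False
          show ?thesis
          proof (cases "P k j")
            case True
            then have "k < i" using jd unfolding P_def by auto
            then have "Th i k = 0" using uT0[of i k] k ij by auto
            then show ?thesis using nik p0 unfolding Th'_def by simp
          next
            case False then show ?thesis using nik unfolding Th'_def Am'_def by simp
          qed
        qed
      qed
      then show ?thesis using e1 Gf[OF ij(1,2) jd] by simp
    qed
    show ?thesis using coc fr e1 GK[OF ij(1,2) jd] Gr[OF ij(1,2) jd] by simp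
  next
    case True
    then have ij': "i < j" "j - i = Suc d" unfolding P_def by auto
    note tp = TP[OF True]
    define a where "a = T i j - T i j ^ p - RR Th Am i j"
    have e1: "Th' i j = T i j" "Am' i j = a" using True unfolding Th'_def Am'_def a_def by auto
    have coc: "\<forall>\<sigma>\<in>G. \<sigma> (Th' i j) = (\<Sum>k<n. rho \<sigma> i k * Th' k j)"
    proof
      fix \<sigma> assume s: "\<sigma> \<in> G"
      have "(\<Sum>k<n. rho \<sigma> i k * Th' k j) = (\<Sum>k<n. (if k = i then T i j else 0) + rho \<sigma> i k * Th0 Th i j k)"
      proof (intro sum.cong refl)
        fix k assume k: "k \<in> {..<n}"
        consider "k = i" | "k < i" | "i < k" by linarith
        then show "rho \<sigma> i k * Th' k j = (if k = i then T i j else 0) + rho \<sigma> i k * Th0 Th i j k"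
        proof cases
          case 1 then show ?thesis using rho_diag[OF s ij(1)] e1 unfolding Th0_def by simp
        next
          case 2 then show ?thesis using rho_below[OF s 2] by simp
        next
          case 3 then have "\<not> P k j" using ij' unfolding P_def by auto
          then show ?thesis using 3 unfolding Th'_def Th0_def by simp
        qed
      qed
      also have "... = T i j + Ff Th i j \<sigma>" unfolding Ff_def using ij by (simp add: sum.distrib)
      finally show "\<sigma> (Th' i j) = (\<Sum>k<n. rho \<sigma> i k * Th' k j)" using tp s e1 by simp
    qed
    have fr: "(\<Sum>k<n. Th' i k ^ p * Am' k j) = Th' i j"
    proof -
      have "(\<Sum>k<n. Th' i k ^ p * Am' k j) = (\<Sum>k<n. (if k = i then a else 0) + (if k = j then T i j ^ p else 0)
              + (if k = i \<or> k = j then 0 else Th i k ^ p * Am k j))"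
      proof (intro sum.cong refl)
        fix k assume k: "k \<in> {..<n}"
        consider "k = i" | "k = j" | "k \<noteq> i" "k \<noteq> j" by blast
        then show "Th' i k ^ p * Am' k j = (if k = i then a else 0) + (if k = j then T i j ^ p else 0)
              + (if k = i \<or> k = j then 0 else Th i k ^ p * Am k j)"
        proof cases
          case 1 then show ?thesis using ij' nP[of i i] uT1[OF ij(1)] e1 unfolding Th'_def by simp
        next
          case 2 then show ?thesis using ij' nP[of j j] uA1[OF ij(2)] e1 unfolding Am'_def by simp
        next
          case 3
          have "\<not> P i k" using 3 ij' unfolding P_def by auto
          moreover have "\<not> P k j" using 3 ij' unfolding P_def by auto
          ultimately show ?thesis using 3 unfolding Th'_def Am'_def by simp
        qed
      qed
      also have "... = a + T i j ^ p + RR Th Am i j" unfolding RR_def using ij by (simp add: sum.distrib)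
      finally show ?thesis using e1 unfolding a_def by simp
    qed
    show ?thesis using coc fr e1 tp unfolding a_def by simp
  qed
  have "Good (Suc d) Th' Am'"
    unfolding Good_def
  proof (intro conjI)
    show "unitri n Th'" unfolding unitri_def Th'_def using uT0 uT1 nP by auto
    show "unitri n Am'" unfolding unitri_def Am'_def using uA0 uA1 nP by auto
  qed (use main in blast)
  then show ?thesis by blast
qed

lemma good_all: "\<exists>Th Am. Good d Th Am"
proof (induction d)
  case 0 then show ?case using good0 by blast
next
  case (Suc d) then show ?case using step by blast
qed

end

lemma field_adjoin_props:
  shows "1 \<in> field_adjoin K S"
    and "\<forall>x\<in>field_adjoin K S. \<forall>y\<in>field_adjoin K S. x + y \<in> field_adjoin K S"
    and "\<forall>x\<in>field_adjoin K S. \<forall>y\<in>field_adjoin K S. x * y \<in> field_adjoin K S"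
    and "K \<subseteq> field_adjoin K S" and "S \<subseteq> field_adjoin K S"
  unfolding field_adjoin_def is_subfield_def by auto

lemma finite_UT: "finite (carrier (UT_Fp n p))"
proof -
  let ?F = "(\<lambda>f. \<lambda>i j. if i < n \<and> j < n then f (i,j) else 0) ` (({..<n} \<times> {..<n}) \<rightarrow>\<^sub>E {..<p})"
  have "carrier (UT_Fp n p) \<subseteq> ?F"
  proof
    fix M assume M: "M \<in> carrier (UT_Fp n p)"
    then have M1: "\<forall>i j. M i j < p" and M2: "\<forall>i j. \<not> (i < n \<and> j < n) \<longrightarrow> M i j = 0" unfolding UT_Fp_def by auto
    have "M = (\<lambda>i j. if i < n \<and> j < n then (restrict (\<lambda>(i,j). M i j) ({..<n} \<times> {..<n})) (i,j) else 0)"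
      using M2 by (auto intro!: ext)
    moreover have "restrict (\<lambda>(i,j). M i j) ({..<n} \<times> {..<n}) \<in> ({..<n} \<times> {..<n}) \<rightarrow>\<^sub>E {..<p}" using M1 by auto
    ultimately show "M \<in> ?F" by (rule image_eqI)
  qed
  moreover have "finite ?F" by (intro finite_imageI finite_PiE) auto
  ultimately show ?thesis by (rule finite_subset)
qed

context main begin

lemma fix_entries_id:
  assumes g: "Good n Th Am" and u': "unitri n Th'" and fe: "\<forall>i<n. \<forall>j<n. (\<Sum>k<n. Th' i k ^ p * Am k j) = Th' i j"
    and s: "\<sigma> \<in> G" and fx: "\<forall>i<n. \<forall>j<n. \<sigma> (Th' i j) = Th' i j"
  shows "\<sigma> = id"
proof -
  have u: "unitri n Th" using g unfolding Good_def by simp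
  have Gc: "\<forall>i<n. \<forall>j<n. \<sigma> (Th i j) = (\<Sum>k<n. rho \<sigma> i k * Th k j)" using g s unfolding Good_def by auto
  have Gf: "\<forall>i<n. \<forall>j<n. (\<Sum>k<n. Th i k ^ p * Am k j) = Th i j" using g unfolding Good_def by auto
  define fr where "fr = (\<lambda>x::'a. x ^ p)"
  have fr_add: "\<forall>a b. fr (a + b) = fr a + fr b" unfolding fr_def using frob_add[OF prime_p char_p] by blast
  have fr_mul: "\<forall>a b. fr (a * b) = fr a * fr b" unfolding fr_def by (simp add: power_mult_distrib)
  have fr0: "fr 0 = 0" and fr1: "fr 1 = 1" unfolding fr_def using p0 by auto
  have s_add: "\<forall>a b. \<sigma> (a + b) = \<sigma> a + \<sigma> b" using aut_add[OF s] by blast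
  have s_mul: "\<forall>a b. \<sigma> (a * b) = \<sigma> a * \<sigma> b" using aut_mult[OF s] by blast
  have s0: "\<sigma> 0 = 0" and s1: "\<sigma> 1 = 1" using aut_zero[OF s] aut_one[OF s] by auto
  define T where "T = Mt n Th"
  define T' where "T' = Mt n Th'"
  define B where "B = Mt n Am"
  define R where "R = Mt n (rho \<sigma>)"
  have cT: "T \<in> carrier_mat n n" and cT': "T' \<in> carrier_mat n n" and cB: "B \<in> carrier_mat n n"
    and cR: "R \<in> carrier_mat n n"
    unfolding T_def T'_def B_def R_def by auto
  obtain Ti where cTi: "Ti \<in> carrier_mat n n" and Ti1: "Ti * T = 1\<^sub>m n" and Ti2: "T * Ti = 1\<^sub>m n"
    using unitri_inv[OF u] unfolding T_def by blast
  obtain T'i where cT'i: "T'i \<in> carrier_mat n n" and T'i1: "T'i * T' = 1\<^sub>m n"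
    using unitri_inv[OF u'] unfolding T'_def by blast
  have e1: "map_mat fr T * B = T"
  proof -
    have "map_mat fr T = Mt n (\<lambda>i j. Th i j ^ p)" unfolding T_def fr_def by (rule eq_matI) auto
    then have "map_mat fr T * B = Mt n (\<lambda>i j. \<Sum>k<n. Th i k ^ p * Am k j)" unfolding B_def by (simp add: Mt_mult)
    also have "... = T" unfolding T_def using Gf by (intro eq_matI) auto
    finally show ?thesis .
  qed
  have e1': "map_mat fr T' * B = T'"
  proof -
    have "map_mat fr T' = Mt n (\<lambda>i j. Th' i j ^ p)" unfolding T'_def fr_def by (rule eq_matI) auto
    then have "map_mat fr T' * B = Mt n (\<lambda>i j. \<Sum>k<n. Th' i k ^ p * Am k j)" unfolding B_def by (simp add: Mt_mult)
    also have "... = T'" unfolding T'_def using fe by (intro eq_matI) auto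
    finally show ?thesis .
  qed
  have e2: "map_mat \<sigma> T = R * T"
  proof -
    have "R * T = Mt n (\<lambda>i j. \<Sum>k<n. rho \<sigma> i k * Th k j)" unfolding R_def T_def by (simp add: Mt_mult)
    also have "... = map_mat \<sigma> T" unfolding T_def using Gc by (intro eq_matI) auto
    finally show ?thesis by simp
  qed
  have e3: "map_mat \<sigma> T' = T'" unfolding T'_def using fx by (intro eq_matI) auto
  note mfr = map_mat_mult[OF fr_add fr_mul fr0]
  note msg = map_mat_mult[OF s_add s_mul s0]
  define g where "g = T' * Ti"
  have cg: "g \<in> carrier_mat n n" unfolding g_def using cT' cTi by simp
  have cFTi: "map_mat fr Ti \<in> carrier_mat n n" using cTi by simp
  have cFT: "map_mat fr T \<in> carrier_mat n n" using cT by simp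
  have cFT': "map_mat fr T' \<in> carrier_mat n n" using cT' by simp
  have f1: "map_mat fr Ti * map_mat fr T = 1\<^sub>m n" using mfr[OF cTi cT] Ti1 map_mat_one[OF fr0 fr1] by simp
  have f2: "B = map_mat fr Ti * T"
  proof -
    have "B = (map_mat fr Ti * map_mat fr T) * B" using f1 cB by simp
    also have "... = map_mat fr Ti * (map_mat fr T * B)" by (rule assoc_mult_mat[OF cFTi cFT cB])
    finally show ?thesis using e1 by simp
  qed
  have f3: "map_mat fr Ti = B * Ti"
  proof -
    have "B * Ti = (map_mat fr Ti * T) * Ti" using f2 by simp
    also have "... = map_mat fr Ti * (T * Ti)" by (rule assoc_mult_mat[OF cFTi cT cTi])
    finally show ?thesis using Ti2 cFTi by simp
  qed
  have fg: "map_mat fr g = g"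
  proof -
    have "map_mat fr g = map_mat fr T' * map_mat fr Ti" unfolding g_def by (rule mfr[OF cT' cTi])
    also have "... = map_mat fr T' * (B * Ti)" using f3 by simp
    also have "... = (map_mat fr T' * B) * Ti" by (rule assoc_mult_mat[OF cFT' cB cTi, symmetric])
    finally show ?thesis using e1' g_def by simp
  qed
  have sg: "map_mat \<sigma> g = g"
  proof (rule eq_matI)
    fix i j assume "i < dim_row g" "j < dim_col g"
    then have ij: "i < n" "j < n" using cg by auto
    have "map_mat fr g $$ (i,j) = g $$ (i,j)" using fg by simp
    then have "fr (g $$ (i,j)) = g $$ (i,j)" using ij cg by simp
    then have "g $$ (i,j) \<in> {x. x ^ p = x}" unfolding fr_def by simp
    then obtain c where "g $$ (i,j) = of_nat c" unfolding frob_fixed[OF prime_p char_p] by blast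
    then show "map_mat \<sigma> g $$ (i,j) = g $$ (i,j)" using ij cg aut_of_nat[OF s] by simp
  qed auto
  have sTi: "map_mat \<sigma> Ti * map_mat \<sigma> T = 1\<^sub>m n" using msg[OF cTi cT] Ti1 map_mat_one[OF s0 s1] by simp
  have cSTi: "map_mat \<sigma> Ti \<in> carrier_mat n n" using cTi by simp
  have cST: "map_mat \<sigma> T \<in> carrier_mat n n" using cT by simp
  have h1: "g * (R * T) = T'"
  proof -
    have "g * (R * T) = map_mat \<sigma> g * map_mat \<sigma> T" using sg e2 by simp
    also have "map_mat \<sigma> g = T' * map_mat \<sigma> Ti" unfolding g_def using msg[OF cT' cTi] e3 by simp
    also have "(T' * map_mat \<sigma> Ti) * map_mat \<sigma> T = T' * (map_mat \<sigma> Ti * map_mat \<sigma> T)"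
      by (rule assoc_mult_mat[OF cT' cSTi cST])
    finally show ?thesis using sTi cT' by simp
  qed
  have h2: "g * T = T'"
  proof -
    have "g * T = T' * (Ti * T)" unfolding g_def by (rule assoc_mult_mat[OF cT' cTi cT])
    then show ?thesis using Ti1 cT' by simp
  qed
  define gi where "gi = T * T'i"
  have cgi: "gi \<in> carrier_mat n n" unfolding gi_def using cT cT'i by simp
  have gig: "gi * g = 1\<^sub>m n"
  proof -
    have "gi * g = T * (T'i * (T' * Ti))" unfolding gi_def g_def
      by (rule assoc_mult_mat[OF cT cT'i mult_carrier_mat[OF cT' cTi]])
    also have "T'i * (T' * Ti) = (T'i * T') * Ti" by (rule assoc_mult_mat[OF cT'i cT' cTi, symmetric])
    finally show ?thesis using T'i1 Ti2 cTi by simp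
  qed
  have RT: "R * T = T"
  proof -
    have "R * T = (gi * g) * (R * T)" using gig cR cT by simp
    also have "... = gi * (g * (R * T))" by (rule assoc_mult_mat[OF cgi cg mult_carrier_mat[OF cR cT]])
    also have "... = gi * (g * T)" using h1 h2 by simp
    also have "... = (gi * g) * T" by (rule assoc_mult_mat[OF cgi cg cT, symmetric])
    finally show ?thesis using gig cT by simp
  qed
  have R1: "R = 1\<^sub>m n"
  proof -
    have "R = R * (T * Ti)" using Ti2 cR by simp
    also have "... = (R * T) * Ti" by (rule assoc_mult_mat[OF cR cT cTi, symmetric])
    finally show ?thesis using RT Ti2 by simp
  qed
  show "\<sigma> = id"
  proof (rule rho_inj[OF s], intro allI impI)
    fix i j assume ij: "i < n" "j < n"
    have "R $$ (i,j) = 1\<^sub>m n $$ (i,j)" using R1 by simp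
    then show "rho \<sigma> i j = (if i = j then 1 else 0)" using ij unfolding R_def by simp
  qed
qed

end


theorem lemma9:
  fixes K k :: "'a::field set" and v :: "'a \<Rightarrow> int" and t :: 'a and p n :: nat
  assumes "prime p" and "CHAR('a) = p"
    and "is_subfield K" and "normalized_discrete_valuation K v" and "v_complete K v"
    and "coefficient_field K v k" and "algebraically_closed_subfield k"
    and "t \<in> K" and "t \<noteq> 0" and "v t = -1"
    and "n \<ge> 2"
    and "finite_galois K" and "Gal K \<cong> UT_Fp n p"
  shows "\<exists>A. in_UT n K A \<and>
      (\<forall>i j l. i < j \<and> j < n \<and> (int p dvd l \<or> l \<ge> 0) \<longrightarrow> coef v k t (A i j) l = 0) \<and>
      (\<exists>\<Theta>. in_UT n UNIV \<Theta> \<and> frob_eq n p \<Theta> A) \<and>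
      (\<forall>\<Theta>. in_UT n UNIV \<Theta> \<and> frob_eq n p \<Theta> A \<longrightarrow>
          field_adjoin K {\<Theta> i j | i j. i < j \<and> j < n} = UNIV)"
proof -
  from assms(13) obtain \<phi> where ph: "\<phi> \<in> iso (Gal K) (UT_Fp n p)" unfolding is_iso_def by blast
  have cG: "carrier (Gal K) = field_auts_fixing K" by (simp add: Gal_def)
  have phom: "\<phi> \<in> hom (Gal K) (UT_Fp n p)" using ph unfolding iso_def by blast
  have pbij: "bij_betw \<phi> (field_auts_fixing K) (carrier (UT_Fp n p))" using ph cG unfolding iso_def by auto
  have finG: "finite (field_auts_fixing K)" using bij_betw_finite[OF pbij] finite_UT by blast
  have fixK: "{x. \<forall>\<sigma>\<in>field_auts_fixing K. \<sigma> x = x} = K" using assms(12) unfolding finite_galois_def by blast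
  interpret M: main K k v t p n \<phi>
    by unfold_locales (use assms finG fixK phom pbij in auto)
  obtain Th Am where g: "M.Good n Th Am" using M.good_all by blast
  have uA: "unitri n Am" and uT: "unitri n Th" using g unfolding M.Good_def by auto
  have Gall: "\<forall>i<n. \<forall>j<n. Am i j \<in> K \<and> (i < j \<longrightarrow> M.red (Am i j)) \<and>
        (\<Sum>k<n. Th i k ^ p * Am k j) = Th i j" using g unfolding M.Good_def by auto
  show ?thesis
  proof (rule exI[of _ Am], intro conjI)
    show "in_UT n K Am" unfolding in_UT_def using uA Gall unfolding unitri_def by auto
    show "\<forall>i j l. i < j \<and> j < n \<and> (int p dvd l \<or> l \<ge> 0) \<longrightarrow> coef v k t (Am i j) l = 0"
      using Gall unfolding M.red_def by auto
    show "\<exists>\<Theta>. in_UT n UNIV \<Theta> \<and> frob_eq n p \<Theta> Am"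
      using uT Gall unfolding in_UT_def frob_eq_def unitri_def by (intro exI[of _ Th]) auto
    show "\<forall>\<Theta>. in_UT n UNIV \<Theta> \<and> frob_eq n p \<Theta> Am \<longrightarrow> field_adjoin K {\<Theta> i j | i j. i < j \<and> j < n} = UNIV"
    proof (intro allI impI)
      fix \<Theta> assume h: "in_UT n UNIV \<Theta> \<and> frob_eq n p \<Theta> Am"
      define E where "E = field_adjoin K {\<Theta> i j | i j. i < j \<and> j < n}"
      have u': "unitri n \<Theta>" using h unfolding in_UT_def unitri_def by auto
      have fe: "\<forall>i<n. \<forall>j<n. (\<Sum>k<n. \<Theta> i k ^ p * Am k j) = \<Theta> i j" using h unfolding frob_eq_def by auto
      have sep: "\<forall>\<sigma>\<in>field_auts_fixing K. \<forall>\<tau>\<in>field_auts_fixing K. \<sigma> \<noteq> \<tau> \<longrightarrow> (\<exists>e\<in>E. \<sigma> e \<noteq> \<tau> e)"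
      proof (intro ballI impI)
        fix \<sigma> \<tau> assume s: "\<sigma> \<in> field_auts_fixing K" and t: "\<tau> \<in> field_auts_fixing K" and ne: "\<sigma> \<noteq> \<tau>"
        show "\<exists>e\<in>E. \<sigma> e \<noteq> \<tau> e"
        proof (rule ccontr)
          assume "\<not> (\<exists>e\<in>E. \<sigma> e \<noteq> \<tau> e)"
          then have eq: "\<forall>e\<in>E. \<sigma> e = \<tau> e" by blast
          define \<mu> where "\<mu> = inv_into UNIV \<tau> \<circ> \<sigma>"
          have mG: "\<mu> \<in> field_auts_fixing K" unfolding \<mu>_def using auts_comp[OF auts_inv[OF t] s] .
          have fx: "\<forall>i<n. \<forall>j<n. \<mu> (\<Theta> i j) = \<Theta> i j"
          proof (intro allI impI)
            fix i j assume ij: "i < n" "j < n"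
            show "\<mu> (\<Theta> i j) = \<Theta> i j"
            proof (cases "i < j")
              case True
              then have "\<Theta> i j \<in> {\<Theta> i j | i j. i < j \<and> j < n}" using ij by blast
              then have "\<Theta> i j \<in> E" unfolding E_def by (rule subsetD[OF field_adjoin_props(5)])
              then have "\<sigma> (\<Theta> i j) = \<tau> (\<Theta> i j)" using eq by blast
              then show ?thesis unfolding \<mu>_def using inv_f_f[OF bij_is_inj[OF aut_bij[OF t]]] by simp
            next
              case False
              then have "\<Theta> i j = 0 \<or> \<Theta> i j = 1" using u' ij unfolding unitri_def by (cases "i = j") auto
              then show ?thesis using aut_zero[OF mG] aut_one[OF mG] by auto
            qed
          qed
          have "\<mu> = id" by (rule M.fix_entries_id[OF g u' fe mG fx])
          then have "\<tau> \<circ> \<mu> = \<tau>" by simp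
          moreover have "\<tau> \<circ> \<mu> = \<sigma>" unfolding \<mu>_def using auts_comp_inv[OF t] by (simp add: o_assoc)
          ultimately show False using ne by simp
        qed
      qed
      show "field_adjoin K {\<Theta> i j | i j. i < j \<and> j < n} = UNIV"
        unfolding E_def[symmetric]
      proof (rule M.generation)
        show "1 \<in> E" unfolding E_def by (rule field_adjoin_props(1))
        show "\<forall>x\<in>E. \<forall>y\<in>E. x + y \<in> E" unfolding E_def by (rule field_adjoin_props(2))
        show "\<forall>x\<in>E. \<forall>y\<in>E. x * y \<in> E" unfolding E_def by (rule field_adjoin_props(3))
        show "K \<subseteq> E" unfolding E_def by (rule field_adjoin_props(4))
        show "\<forall>\<sigma>\<in>field_auts_fixing K. \<forall>\<tau>\<in>field_auts_fixing K. \<sigma> \<noteq> \<tau> \<longrightarrow> (\<exists>e\<in>E. \<sigma> e \<noteq> \<tau> e)"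
          by (rule sep)
      qed
    qed
  qed
qed


end
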